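(* Let $L>0$, $V\in C^1([0,L];\mathbb{R})$ such that the only $x\in[0,L]$ with $V'(x)=0$ is $\mathbf{x}_0\in(0,L)$ and $V(\mathbf{x}_0)=\min_{[0,L]}V$. For $\varepsilon\in(0,1]$ let $q_\varepsilon\in C^1([0,L];\mathbb{R})$ with $q_\varepsilon\to0$ in $C^1([0,L])$, and $V_\varepsilon=V+q_\varepsilon$. Then for any family $(\lambda_\varepsilon)_{\varepsilon\in(0,1)}$ of real numbers with $\lambda_\varepsilon\to0$ as $\varepsilon\to0^+$ and any $\nu>0$, there are constants $C,\varepsilon_0>0$ such that for all $y\in[0,L]$, all $\varepsilon\in(0,\varepsilon_0]$, all $E\in\mathbb{R}$ and all $\psi$ satisfying $$-\varepsilon^2\psi''+V_\varepsilon\psi=E\psi,\qquad \psi\in H^2(0,L)\cap H^1_0(0,L),\qquad\|\psi\|_{L^2(0,L)}=1,$$ we have \begin{itemize} \item $\|\psi\|_{L^2(U)}\ge C$ with $U=(y-\nu,y+\nu)\cap[0,L]$, if $E\ge V(y)-\lambda_\varepsilon$; \item $\frac{\varepsilon}{\sqrt{|E|+1}}|\psi'(0)|\ge C$ if $E\ge V(0)+\nu$; \item $\frac{\varepsilon}{\sqrt{|E|+1}}|\psi'(L)|\ge C$ if $E\ge V(L)+\nu$. \end{itemize} *)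

theory Defs
  imports "HOL-Analysis.Analysis"
begin

definition C1_on_interval :: "real \<Rightarrow> (real \<Rightarrow> real) \<Rightarrow> (real \<Rightarrow> real) \<Rightarrow> bool" where
  "C1_on_interval L f f' \<longleftrightarrow>
     (\<forall>x\<in>{0..L}. (f has_real_derivative f' x) (at x within {0..L})) \<and> continuous_on {0..L} f'"

text \<open>Membership in H^2(0,L) of (the continuous representative) psi, with first derivative
  psi' and weak second derivative psi'': psi is differentiable on [0,L] with derivative psi',
  psi' is absolutely continuous with derivative psi'' (i.e. psi' x = psi' 0 + integral of psi''),
  and psi'' is in L^2(0,L).\<close>
definition H2_on :: "real \<Rightarrow> (real \<Rightarrow> complex) \<Rightarrow> (real \<Rightarrow> complex) \<Rightarrow> (real \<Rightarrow> complex) \<Rightarrow> bool" where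
  "H2_on L \<psi> \<psi>' \<psi>'' \<longleftrightarrow>
     (\<forall>x\<in>{0..L}. (\<psi> has_vector_derivative \<psi>' x) (at x within {0..L})) \<and>
     \<psi>'' absolutely_integrable_on {0..L} \<and>
     (\<lambda>x. (norm (\<psi>'' x))\<^sup>2) integrable_on {0..L} \<and>
     (\<forall>x\<in>{0..L}. \<psi>' x = \<psi>' 0 + integral {0..x} \<psi>'')"

text \<open>H^1_0(0,L) boundary condition for the continuous representative.\<close>
definition dirichlet_bc :: "real \<Rightarrow> (real \<Rightarrow> complex) \<Rightarrow> bool" where
  "dirichlet_bc L \<psi> \<longleftrightarrow> \<psi> 0 = 0 \<and> \<psi> L = 0"

definition L2_norm_on :: "real set \<Rightarrow> (real \<Rightarrow> complex) \<Rightarrow> real" where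
  "L2_norm_on U \<psi> = sqrt (integral U (\<lambda>x. (norm (\<psi> x))\<^sup>2))"

end

theory Submission
  imports Defs
begin

lemma alg1:
  fixes S \<rho> E1 E2 r l e :: real
  assumes "S > 0" "\<rho> > 0"
  shows "S * (r * (l * E1 / (2 * \<rho>) - e * E2 / (2 * sqrt S))) = S / \<rho> * (E1 * r) * l / 2 - e * (E2 * r) * sqrt S / 2"
proof -
  have s: "S / sqrt S = sqrt S" using assms by (simp add: real_div_sqrt)
  have "sqrt S > 0" using assms by simp
  then have "S * (r * (l * E1 / (2 * \<rho>) - e * E2 / (2 * sqrt S))) = S / \<rho> * (E1 * r) * l / 2 - e * (E2 * r) * (S / sqrt S) / 2"
    using assms by (simp add: field_simps)
  then show ?thesis unfolding s .
qed


locale sol =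
  fixes L e E :: real and W W' a b a' b' :: "real \<Rightarrow> real"
  assumes L_pos: "0 < L" and e_pos: "0 < e"
    and W_d: "\<And>x. x \<in> {0..L} \<Longrightarrow> (W has_real_derivative W' x) (at x within {0..L})"
    and W'_c: "continuous_on {0..L} W'"
    and a_d: "\<And>x. x \<in> {0..L} \<Longrightarrow> (a has_real_derivative a' x) (at x within {0..L})"
    and b_d: "\<And>x. x \<in> {0..L} \<Longrightarrow> (b has_real_derivative b' x) (at x within {0..L})"
    and a'_d: "\<And>x. x \<in> {0..L} \<Longrightarrow> (a' has_real_derivative (- (E - W x) / e\<^sup>2 * a x)) (at x within {0..L})"
    and b'_d: "\<And>x. x \<in> {0..L} \<Longrightarrow> (b' has_real_derivative (- (E - W x) / e\<^sup>2 * b x)) (at x within {0..L})"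
    and bc: "a 0 = 0" "b 0 = 0" "a L = 0" "b L = 0"
    and norm1: "integral {0..L} (\<lambda>x. (a x)\<^sup>2 + (b x)\<^sup>2) = 1"
begin

definition "f x = E - W x"
definition "w x = (a x)\<^sup>2 + (b x)\<^sup>2"
definition "p x = (a' x)\<^sup>2 + (b' x)\<^sup>2"
definition "j x = a x * a' x + b x * b' x"
definition "Q x = e\<^sup>2 * p x + f x * w x"
definition "R x = Q x / f x"

lemma ftc:
  assumes "\<And>x. x \<in> {0..L} \<Longrightarrow> (F has_real_derivative F' x) (at x within {0..L})"
    and "0 \<le> s" "s \<le> t" "t \<le> L"
  shows "(F' has_integral (F t - F s)) {s..t}"
  apply (rule fundamental_theorem_of_calculus[OF \<open>s \<le> t\<close>])
  unfolding has_real_derivative_iff_has_vector_derivative[symmetric]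
  apply (rule has_field_derivative_subset[OF assms(1)])
  using assms by auto

lemma cont_of_d:
  assumes "\<And>x. x \<in> {0..L} \<Longrightarrow> (F has_real_derivative F' x) (at x within {0..L})"
  shows "continuous_on {0..L} F"
  using assms by (meson DERIV_continuous continuous_on_eq_continuous_within)

lemma a_c: "continuous_on {0..L} a" using cont_of_d[OF a_d] .
lemma b_c: "continuous_on {0..L} b" using cont_of_d[OF b_d] .
lemma a'_c: "continuous_on {0..L} a'" using cont_of_d[OF a'_d] .
lemma b'_c: "continuous_on {0..L} b'" using cont_of_d[OF b'_d] .
lemma W_c: "continuous_on {0..L} W" using cont_of_d[OF W_d] .

lemma w_c: "continuous_on {0..L} w" unfolding w_def using a_c b_c by (intro continuous_intros)
lemma p_c: "continuous_on {0..L} p" unfolding p_def using a'_c b'_c by (intro continuous_intros)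
lemma f_c: "continuous_on {0..L} f" unfolding f_def using W_c by (intro continuous_intros)

lemma w_nn: "0 \<le> w x" unfolding w_def by simp
lemma p_nn: "0 \<le> p x" unfolding p_def by simp

lemma w_d: assumes x: "x \<in> {0..L}" shows "(w has_real_derivative 2 * j x) (at x within {0..L})"
proof -
  note d = a_d[OF x] b_d[OF x] a'_d[OF x] b'_d[OF x] W_d[OF x]
  show ?thesis unfolding w_def j_def
    by (rule DERIV_cong, (rule derivative_intros d)+, simp add: algebra_simps)
qed

lemma j_d: assumes x: "x \<in> {0..L}" shows "(j has_real_derivative p x - f x * w x / e\<^sup>2) (at x within {0..L})"
proof -
  note d = a_d[OF x] b_d[OF x] a'_d[OF x] b'_d[OF x] W_d[OF x]
  show ?thesis unfolding p_def j_def f_def w_def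
    by (rule DERIV_cong, (rule derivative_intros d)+, insert e_pos, simp add: field_simps power2_eq_square)
qed

lemma Q_d: assumes x: "x \<in> {0..L}" shows "(Q has_real_derivative - W' x * w x) (at x within {0..L})"
proof -
  note d = a_d[OF x] b_d[OF x] a'_d[OF x] b'_d[OF x] W_d[OF x]
  show ?thesis unfolding Q_def p_def f_def w_def
    by (rule DERIV_cong, (rule derivative_intros d)+, insert e_pos, simp add: field_simps power2_eq_square)
qed


lemma int_on: fixes g :: "real \<Rightarrow> real" assumes "continuous_on {0..L} g" "0 \<le> s" "t \<le> L" shows "g integrable_on {s..t}"
  apply (rule integrable_continuous_interval) apply (rule continuous_on_subset[OF assms(1)]) using assms by auto

lemma j_c: "continuous_on {0..L} j" unfolding j_def using a_c b_c a'_c b'_c by (intro continuous_intros)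
lemma Q_c: "continuous_on {0..L} Q" unfolding Q_def using p_c f_c w_c by (intro continuous_intros)
lemma fw_c: "continuous_on {0..L} (\<lambda>x. f x * w x)" using f_c w_c by (intro continuous_intros)

lemma jL: "j L = 0" and j0: "j 0 = 0" and wL: "w L = 0" and w0: "w 0 = 0"
  using bc by (simp_all add: j_def w_def)

lemma energy: "e\<^sup>2 * integral {0..L} p = integral {0..L} (\<lambda>x. f x * w x)"
proof -
  have "((\<lambda>x. p x - f x * w x / e\<^sup>2) has_integral (j L - j 0)) {0..L}"
    by (rule ftc[OF j_d]) (use L_pos in auto)
  then have "integral {0..L} (\<lambda>x. p x - f x * w x / e\<^sup>2) = 0" by (simp add: integral_unique jL j0)
  moreover have "integral {0..L} (\<lambda>x. p x - f x * w x / e\<^sup>2) = integral {0..L} p - integral {0..L} (\<lambda>x. f x * w x) / e\<^sup>2"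
    by (rule integral_unique, intro has_integral_diff has_integral_divide integrable_integral
         int_on[OF p_c] int_on[OF fw_c]) auto
  ultimately show ?thesis using e_pos by (simp add: field_simps)
qed

lemma w_int: "0 \<le> s \<Longrightarrow> t \<le> L \<Longrightarrow> w integrable_on {s..t}" by (rule int_on[OF w_c])
lemma p_int: "0 \<le> s \<Longrightarrow> t \<le> L \<Longrightarrow> p integrable_on {s..t}" by (rule int_on[OF p_c])

lemma w_tot: "integral {0..L} w = 1" using norm1 by (simp add: w_def[abs_def])

lemma int_mono_sub: fixes g :: "real \<Rightarrow> real" assumes "0 \<le> s" "s \<le> t" "t \<le> L" "continuous_on {0..L} g" "\<And>x. x \<in> {0..L} \<Longrightarrow> 0 \<le> g x"
  shows "integral {s..t} g \<le> integral {0..L} g"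
proof -
  have "{s..t} \<subseteq> {0..L}" using assms by auto
  then show ?thesis
    apply (rule integral_subset_le)
      apply (rule int_on[OF assms(4) assms(1) assms(3)])
     apply (rule int_on[OF assms(4)])
    using assms by auto
qed

lemma sup_bound:
  assumes A: "A > 0" and x: "x \<in> {0..L}"
  shows "w x \<le> A + integral {0..L} p / A"
proof -
  have h: "((\<lambda>x. 2 * j x) has_integral (w x - w 0)) {0..x}"
    by (rule ftc[OF w_d]) (use x in auto)
  have pt: "2 * j y \<le> A * w y + p y / A" for y
  proof -
    have "0 \<le> (A * a y - a' y)\<^sup>2 + (A * b y - b' y)\<^sup>2" by simp
    also have "\<dots> = A * A * w y + p y - 2 * A * j y"
      by (simp add: j_def w_def p_def algebra_simps power2_eq_square)
    finally have "A * (2 * j y) \<le> A * (A * w y + p y / A)"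
      using A by (simp add: algebra_simps)
    then show ?thesis using A by simp
  qed
  have c2: "continuous_on {0..L} (\<lambda>y. A * w y + p y / A)" using w_c p_c by (intro continuous_intros) (use A in auto)
  have "w x - w 0 \<le> integral {0..x} (\<lambda>y. A * w y + p y / A)"
    by (rule has_integral_le[OF h integrable_integral[OF int_on[OF c2]]]) (use x pt in auto)
  also have "\<dots> \<le> integral {0..L} (\<lambda>y. A * w y + p y / A)"
    by (rule int_mono_sub[OF _ _ _ c2]) (use x A w_nn p_nn in auto)
  also have "\<dots> = A * 1 + integral {0..L} p / A"
  proof (rule integral_unique, intro has_integral_add has_integral_mult_right has_integral_divide)
    show "(w has_integral 1) {0..L}" using integrable_integral[OF int_on[OF w_c, of 0 L]] w_tot by simp
    show "(p has_integral integral {0..L} p) {0..L}" using integrable_integral[OF int_on[OF p_c, of 0 L]] by simp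
  qed
  finally show ?thesis by (simp add: w0)
qed

lemma agmon_right:
  assumes bb: "0 \<le> bb" "bb \<le> L" and c: "c > 0" and fneg: "\<And>x. x \<in> {bb..L} \<Longrightarrow> f x \<le> - c"
  shows "2 * c / e\<^sup>2 * integral {bb..L} (\<lambda>x. (x - bb) * w x) \<le> w bb"
proof -
  define F where "F x = (x - bb) * (2 * j x) - w x" for x
  have "(F has_real_derivative 2 * (x - bb) * (p x - f x * w x / e\<^sup>2)) (at x within {0..L})" if "x \<in> {0..L}" for x
    unfolding F_def
    by (rule DERIV_cong, (rule derivative_intros j_d w_d that)+) (simp add: algebra_simps)
  from ftc[OF this, of bb L] bb
  have h: "((\<lambda>x. 2 * (x - bb) * (p x - f x * w x / e\<^sup>2)) has_integral w bb) {bb..L}"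
    by (simp add: F_def jL wL)
  have c2: "continuous_on {0..L} (\<lambda>x. 2 * c / e\<^sup>2 * ((x - bb) * w x))" using w_c by (intro continuous_intros)
  have "integral {bb..L} (\<lambda>x. 2 * c / e\<^sup>2 * ((x - bb) * w x)) \<le> w bb"
  proof (rule has_integral_le[OF integrable_integral[OF int_on[OF c2]] h])
    fix x assume x: "x \<in> {bb..L}"
    have "c * w x \<le> (- f x) * w x" using fneg[OF x] w_nn[of x] by (intro mult_right_mono) auto
    then have "2 * (x - bb) / e\<^sup>2 * (c * w x) \<le> 2 * (x - bb) / e\<^sup>2 * ((- f x) * w x)"
      using x e_pos by (intro mult_left_mono) auto
    moreover have "2 * c / e\<^sup>2 * ((x - bb) * w x) = 2 * (x - bb) / e\<^sup>2 * (c * w x)" using e_pos by (simp add: field_simps)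
    moreover have "2 * (x - bb) / e\<^sup>2 * ((- f x) * w x) = 2 * (x - bb) * (- f x * w x / e\<^sup>2)" using e_pos by (simp add: field_simps)
    ultimately have "2 * c / e\<^sup>2 * ((x - bb) * w x) \<le> 2 * (x - bb) * (- f x * w x / e\<^sup>2)"
      by linarith
    also have "\<dots> \<le> 2 * (x - bb) * (p x - f x * w x / e\<^sup>2)"
      by (rule mult_left_mono) (use x p_nn[of x] in auto)
    finally show "2 * c / e\<^sup>2 * ((x - bb) * w x) \<le> 2 * (x - bb) * (p x - f x * w x / e\<^sup>2)" .
  qed (use bb in auto)
  then show ?thesis by simp
qed

lemma agmon_left:
  assumes aa: "0 \<le> aa" "aa \<le> L" and c: "c > 0" and fneg: "\<And>x. x \<in> {0..aa} \<Longrightarrow> f x \<le> - c"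
  shows "2 * c / e\<^sup>2 * integral {0..aa} (\<lambda>x. (aa - x) * w x) \<le> w aa"
proof -
  define F where "F x = (aa - x) * (2 * j x) + w x" for x
  have "(F has_real_derivative 2 * (aa - x) * (p x - f x * w x / e\<^sup>2)) (at x within {0..L})" if "x \<in> {0..L}" for x
    unfolding F_def
    by (rule DERIV_cong, (rule derivative_intros j_d w_d that)+) (simp add: algebra_simps)
  from ftc[OF this, of 0 aa] aa
  have h: "((\<lambda>x. 2 * (aa - x) * (p x - f x * w x / e\<^sup>2)) has_integral w aa) {0..aa}"
    by (simp add: F_def j0 w0)
  have c2: "continuous_on {0..L} (\<lambda>x. 2 * c / e\<^sup>2 * ((aa - x) * w x))" using w_c by (intro continuous_intros)
  have "integral {0..aa} (\<lambda>x. 2 * c / e\<^sup>2 * ((aa - x) * w x)) \<le> w aa"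
  proof (rule has_integral_le[OF integrable_integral[OF int_on[OF c2]] h])
    fix x assume x: "x \<in> {0..aa}"
    have "c * w x \<le> (- f x) * w x" using fneg[OF x] w_nn[of x] by (intro mult_right_mono) auto
    then have "2 * (aa - x) / e\<^sup>2 * (c * w x) \<le> 2 * (aa - x) / e\<^sup>2 * ((- f x) * w x)"
      using x e_pos by (intro mult_left_mono) auto
    moreover have "2 * c / e\<^sup>2 * ((aa - x) * w x) = 2 * (aa - x) / e\<^sup>2 * (c * w x)" using e_pos by (simp add: field_simps)
    moreover have "2 * (aa - x) / e\<^sup>2 * ((- f x) * w x) = 2 * (aa - x) * (- f x * w x / e\<^sup>2)" using e_pos by (simp add: field_simps)
    ultimately have "2 * c / e\<^sup>2 * ((aa - x) * w x) \<le> 2 * (aa - x) * (- f x * w x / e\<^sup>2)"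
      by linarith
    also have "\<dots> \<le> 2 * (aa - x) * (p x - f x * w x / e\<^sup>2)"
      by (rule mult_left_mono) (use x p_nn[of x] in auto)
    finally show "2 * c / e\<^sup>2 * ((aa - x) * w x) \<le> 2 * (aa - x) * (p x - f x * w x / e\<^sup>2)" .
  qed (use aa in auto)
  then show ?thesis by simp
qed

lemma Q_nn_end: "0 \<le> Q 0" "0 \<le> Q L" by (simp_all add: Q_def w0 wL p_nn)

lemma tail_right:
  assumes s: "0 \<le> s" "s \<le> L" and mu: "\<And>x. x \<in> {s..L} \<Longrightarrow> W' x \<ge> \<mu>"
  shows "\<mu> * integral {s..L} w \<le> Q s"
proof -
  have h: "((\<lambda>x. - W' x * w x) has_integral (Q L - Q s)) {s..L}" by (rule ftc[OF Q_d]) (use s in auto)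
  have c2: "continuous_on {0..L} (\<lambda>x. - (\<mu> * w x))" using w_c by (intro continuous_intros)
  have "Q L - Q s \<le> integral {s..L} (\<lambda>x. - (\<mu> * w x))"
    by (rule has_integral_le[OF h integrable_integral[OF int_on[OF c2]]])
       (use s mu w_nn in \<open>auto intro!: mult_right_mono\<close>)
  then show ?thesis using Q_nn_end by simp
qed

lemma tail_left:
  assumes s: "0 \<le> s" "s \<le> L" and mu: "\<And>x. x \<in> {0..s} \<Longrightarrow> W' x \<le> - \<mu>"
  shows "\<mu> * integral {0..s} w \<le> Q s"
proof -
  have h: "((\<lambda>x. - W' x * w x) has_integral (Q s - Q 0)) {0..s}" by (rule ftc[OF Q_d]) (use s in auto)
  have c2: "continuous_on {0..L} (\<lambda>x. \<mu> * w x)" using w_c by (intro continuous_intros)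
  have "integral {0..s} (\<lambda>x. \<mu> * w x) \<le> Q s - Q 0"
  proof (rule has_integral_le[OF integrable_integral[OF int_on[OF c2]] h])
    fix x assume x: "x \<in> {0..s}"
    have "\<mu> * w x \<le> (- W' x) * w x" using mu[OF x] w_nn[of x] by (intro mult_right_mono) auto
    then show "\<mu> * w x \<le> - W' x * w x" by simp
  qed (use s in auto)
  then show ?thesis using Q_nn_end by simp
qed


lemma dec_of_deriv:
  fixes G G' :: "real \<Rightarrow> real"
  assumes d: "\<And>x. x \<in> {s..t} \<Longrightarrow> (G has_real_derivative G' x) (at x within {s..t})"
    and n: "\<And>x. x \<in> {s..t} \<Longrightarrow> G' x \<le> 0" and zx: "s \<le> z" "z \<le> x" "x \<le> t"
  shows "G x \<le> G z"
proof -
  have "(G' has_integral (G x - G z)) {z..x}"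
    apply (rule fundamental_theorem_of_calculus[OF zx(2)])
    unfolding has_real_derivative_iff_has_vector_derivative[symmetric]
    apply (rule has_field_derivative_subset[OF d])
    using zx by auto
  from has_integral_le[OF this has_integral_0] n zx show ?thesis by auto
qed

lemma R_d:
  assumes x: "x \<in> {0..L}" and fx: "f x \<noteq> 0"
  shows "(R has_real_derivative W' x * e\<^sup>2 * p x / (f x)\<^sup>2) (at x within {0..L})"
proof -
  have fd: "(f has_real_derivative - W' x) (at x within {0..L})"
    unfolding f_def[abs_def] by (rule derivative_eq_intros W_d[OF x] | simp)+
  show ?thesis unfolding R_def[abs_def]
    apply (rule DERIV_cong, rule DERIV_divide[OF Q_d[OF x] fd fx])
    using fx by (simp add: Q_def field_simps power2_eq_square)
qed

lemma R_ge_w: "0 < f x \<Longrightarrow> w x \<le> R x"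
  unfolding R_def Q_def using p_nn[of x] e_pos by (simp add: field_simps)

lemma R_nn: "0 < f x \<Longrightarrow> 0 \<le> R x"
  using R_ge_w w_nn order_trans by blast

lemma Q_eq: "0 < f x \<Longrightarrow> Q x = f x * R x"
  unfolding R_def by simp

lemma gronwall:
  assumes st: "0 \<le> s" "t \<le> L" and tau: "\<tau> > 0"
    and h: "\<And>x. x \<in> {s..t} \<Longrightarrow> \<tau> \<le> f x \<and> \<bar>W' x\<bar> \<le> K1"
    and x: "x \<in> {s..t}" and z: "z \<in> {s..t}"
  shows "R x \<le> exp (K1 / \<tau> * \<bar>x - z\<bar>) * R z"
proof -
  define \<kappa> where "\<kappa> = K1 / \<tau>"
  have fpos: "0 < f y" if "y \<in> {s..t}" for y using h[OF that] tau by auto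
  have Rd: "(R has_real_derivative W' y * e\<^sup>2 * p y / (f y)\<^sup>2) (at y within {s..t})" if "y \<in> {s..t}" for y
    apply (rule has_field_derivative_subset[OF R_d])
    using that st fpos[OF that] by auto
  have Rb: "\<bar>W' y * e\<^sup>2 * p y / (f y)\<^sup>2\<bar> \<le> \<kappa> * R y" if y: "y \<in> {s..t}" for y
  proof -
    have fy: "\<tau> \<le> f y" "\<bar>W' y\<bar> \<le> K1" using h[OF y] by auto
    have "\<bar>W' y * e\<^sup>2 * p y / (f y)\<^sup>2\<bar> = \<bar>W' y\<bar> / f y * (e\<^sup>2 * p y / f y)"
      using fy tau p_nn[of y] by (simp add: abs_mult power2_eq_square)
    also have "\<dots> \<le> \<kappa> * (e\<^sup>2 * p y / f y)"
    proof (rule mult_right_mono)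
      have "\<bar>W' y\<bar> / f y \<le> K1 / f y" using fy tau by (simp add: divide_right_mono)
      also have "\<dots> \<le> K1 / \<tau>" using fy tau by (intro divide_left_mono) (auto intro: order_trans[OF abs_ge_zero])
      finally show "\<bar>W' y\<bar> / f y \<le> \<kappa>" unfolding \<kappa>_def .
      show "0 \<le> e\<^sup>2 * p y / f y" using fy tau p_nn[of y] by simp
    qed
    also have "\<dots> \<le> \<kappa> * R y"
    proof (rule mult_left_mono)
      show "e\<^sup>2 * p y / f y \<le> R y" unfolding R_def Q_def using fy tau w_nn[of y] by (simp add: add_divide_distrib)
      have "0 \<le> \<bar>W' y\<bar>" by simp
      then show "0 \<le> \<kappa>" unfolding \<kappa>_def using fy tau by simp
    qed
    finally show ?thesis .
  qed
  show ?thesis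
  proof (cases "z \<le> x")
    case True
    define G where "G y = R y * exp (- \<kappa> * y)" for y
    have "G x \<le> G z"
    proof (rule dec_of_deriv[where s = s and t = t and G = G and G' = "\<lambda>y. (W' y * e\<^sup>2 * p y / (f y)\<^sup>2 - \<kappa> * R y) * exp (- \<kappa> * y)"])
      fix y assume y: "y \<in> {s..t}"
      show "(G has_real_derivative (W' y * e\<^sup>2 * p y / (f y)\<^sup>2 - \<kappa> * R y) * exp (- \<kappa> * y)) (at y within {s..t})"
        unfolding G_def[abs_def]
        by (rule DERIV_cong, (rule derivative_intros Rd[OF y])+) (simp add: algebra_simps)
      show "(W' y * e\<^sup>2 * p y / (f y)\<^sup>2 - \<kappa> * R y) * exp (- \<kappa> * y) \<le> 0"
      proof (rule mult_nonpos_nonneg)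
        have "W' y * e\<^sup>2 * p y / (f y)\<^sup>2 \<le> \<kappa> * R y" using Rb[OF y] by (meson abs_ge_self order_trans)
        then show "W' y * e\<^sup>2 * p y / (f y)\<^sup>2 - \<kappa> * R y \<le> 0" by simp
      qed simp
    qed (use True x z in auto)
    then have g: "R x * exp (- \<kappa> * x) \<le> R z * exp (- \<kappa> * z)" by (simp add: G_def)
    have "R x = R x * exp (- \<kappa> * x) * exp (\<kappa> * x)" by (simp add: mult.assoc exp_add[symmetric])
    also have "\<dots> \<le> R z * exp (- \<kappa> * z) * exp (\<kappa> * x)" using g by (intro mult_right_mono) auto
    also have "\<dots> = R z * exp (\<kappa> * (x - z))" by (simp add: mult.assoc exp_add[symmetric] algebra_simps)
    finally have "R x \<le> R z * exp (\<kappa> * (x - z))" .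
    then show ?thesis using True unfolding \<kappa>_def by (simp add: mult.commute)
  next
    case False
    define G where "G y = - (R y * exp (\<kappa> * y))" for y
    have "G z \<le> G x"
    proof (rule dec_of_deriv[where s = s and t = t and G = G and G' = "\<lambda>y. - ((W' y * e\<^sup>2 * p y / (f y)\<^sup>2 + \<kappa> * R y) * exp (\<kappa> * y))"])
      fix y assume y: "y \<in> {s..t}"
      show "(G has_real_derivative - ((W' y * e\<^sup>2 * p y / (f y)\<^sup>2 + \<kappa> * R y) * exp (\<kappa> * y))) (at y within {s..t})"
        unfolding G_def[abs_def]
        by (rule DERIV_cong, (rule derivative_intros Rd[OF y])+) (simp add: algebra_simps)
      show "- ((W' y * e\<^sup>2 * p y / (f y)\<^sup>2 + \<kappa> * R y) * exp (\<kappa> * y)) \<le> 0"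
      proof -
        have "- (W' y * e\<^sup>2 * p y / (f y)\<^sup>2) \<le> \<kappa> * R y" using Rb[OF y] by (meson abs_ge_minus_self order_trans)
        then show ?thesis by (simp add: mult_nonneg_nonneg)
      qed
    qed (use False x z in auto)
    then have g: "R x * exp (\<kappa> * x) \<le> R z * exp (\<kappa> * z)" by (simp add: G_def)
    have "R x = R x * exp (\<kappa> * x) * exp (- \<kappa> * x)" by (simp add: mult.assoc exp_add[symmetric])
    also have "\<dots> \<le> R z * exp (\<kappa> * z) * exp (- \<kappa> * x)" using g by (intro mult_right_mono) auto
    also have "\<dots> = R z * exp (\<kappa> * (z - x))" by (simp add: mult.assoc exp_add[symmetric] algebra_simps)
    finally have "R x \<le> R z * exp (\<kappa> * (z - x))" .
    then show ?thesis using False unfolding \<kappa>_def by (simp add: mult.commute)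
  qed
qed

lemma bulk:
  assumes st: "0 \<le> s" "s \<le> t" "t \<le> L"
  shows "integral {s..t} (\<lambda>x. f x * w x) = integral {s..t} Q / 2 - e\<^sup>2 * (j t - j s) / 2"
proof -
  have h: "((\<lambda>x. p x - f x * w x / e\<^sup>2) has_integral (j t - j s)) {s..t}" by (rule ftc[OF j_d]) (use st in auto)
  have "((\<lambda>x. e\<^sup>2 * (p x - f x * w x / e\<^sup>2)) has_integral e\<^sup>2 * (j t - j s)) {s..t}"
    by (rule has_integral_mult_right[OF h])
  moreover have "(\<lambda>x. e\<^sup>2 * (p x - f x * w x / e\<^sup>2)) = (\<lambda>x. Q x - 2 * (f x * w x))"
    using e_pos by (auto simp: Q_def field_simps)
  ultimately have "integral {s..t} (\<lambda>x. Q x - 2 * (f x * w x)) = e\<^sup>2 * (j t - j s)" by (simp add: integral_unique)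
  moreover have "integral {s..t} (\<lambda>x. Q x - 2 * (f x * w x)) = integral {s..t} Q - 2 * integral {s..t} (\<lambda>x. f x * w x)"
    using int_on[OF Q_c st(1) st(3)] int_on[OF fw_c st(1) st(3)] by (simp add: integral_diff)
  ultimately show ?thesis by simp
qed

lemma j_end:
  assumes fx: "0 < f x"
  shows "e\<^sup>2 * \<bar>j x\<bar> \<le> e * R x * sqrt (f x) / 2"
proof -
  define r where "r = sqrt (f x)"
  have r: "r > 0" "r * r = f x" using fx by (auto simp: r_def)
  have fr: "f x = r * r" using r by simp
  have 1: "0 \<le> (e * a' x - r * a x)\<^sup>2 + (e * b' x - r * b x)\<^sup>2" by simp
  have 2: "0 \<le> (e * a' x + r * a x)\<^sup>2 + (e * b' x + r * b x)\<^sup>2" by simp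
  have "(e * a' x - r * a x)\<^sup>2 + (e * b' x - r * b x)\<^sup>2 = Q x - 2 * e * r * j x"
    unfolding Q_def p_def w_def j_def fr by (simp add: power2_eq_square algebra_simps)
  moreover have "(e * a' x + r * a x)\<^sup>2 + (e * b' x + r * b x)\<^sup>2 = Q x + 2 * e * r * j x"
    unfolding Q_def p_def w_def j_def fr by (simp add: power2_eq_square algebra_simps)
  ultimately have "2 * e * r * \<bar>j x\<bar> \<le> Q x" using 1 2 by (auto simp: abs_if)
  also have "Q x = r * r * R x" using Q_eq[OF fx] r by simp
  finally have "r * (2 * e * \<bar>j x\<bar>) \<le> r * (r * R x)" by (simp add: algebra_simps)
  then have "2 * e * \<bar>j x\<bar> \<le> r * R x" using r by simp
  then have "e * (2 * e * \<bar>j x\<bar>) \<le> e * (r * R x)" using e_pos by simp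
  then show ?thesis unfolding r_def by (simp add: power2_eq_square algebra_simps)
qed


lemma mass_lower:
  assumes st: "0 \<le> s" "s < t" "t \<le> L" and tau: "\<tau> > 0" and rho: "\<rho> > 0"
    and h: "\<And>x. x \<in> {s..t} \<Longrightarrow> \<tau> \<le> f x \<and> \<bar>W' x\<bar> \<le> K1"
    and hS: "\<And>x. x \<in> {s..t} \<Longrightarrow> f x \<le> S \<and> S \<le> \<rho> * f x"
  shows "R s * ((t - s) * exp (- (K1 / \<tau> * (t - s))) / (2 * \<rho>) - e * exp (K1 / \<tau> * (t - s)) / (2 * sqrt S))
    \<le> integral {s..t} w"
proof -
  define \<kappa> where "\<kappa> = K1 / \<tau>"
  define l where "l = t - s"
  have sJ: "s \<in> {s..t}" and tJ: "t \<in> {s..t}" using st by auto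
  have K1: "0 \<le> K1" using h[OF sJ] by (auto intro: order_trans[OF abs_ge_zero])
  have ka: "0 \<le> \<kappa>" using K1 tau by (simp add: \<kappa>_def)
  have S: "S > 0" using hS[OF sJ] h[OF sJ] tau by auto
  have fpos: "0 < f x" if "x \<in> {s..t}" for x using h[OF that] tau by auto
  have Rs: "0 \<le> R s" using R_nn[OF fpos[OF sJ]] .
  have up: "R x \<le> exp (\<kappa> * l) * R s" if x: "x \<in> {s..t}" for x
  proof -
    have "R x \<le> exp (\<kappa> * \<bar>x - s\<bar>) * R s" using gronwall[OF st(1) st(3) tau h x sJ] unfolding \<kappa>_def by blast
    also have "\<dots> \<le> exp (\<kappa> * l) * R s"
      using x ka Rs by (intro mult_right_mono) (auto simp: l_def intro!: mult_left_mono)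
    finally show ?thesis .
  qed
  have lo: "exp (- (\<kappa> * l)) * R s \<le> R x" if x: "x \<in> {s..t}" for x
  proof -
    have "R s \<le> exp (\<kappa> * \<bar>s - x\<bar>) * R x" using gronwall[OF st(1) st(3) tau h sJ x] unfolding \<kappa>_def by blast
    also have "\<dots> \<le> exp (\<kappa> * l) * R x"
      using x ka R_nn[OF fpos[OF x]] by (intro mult_right_mono) (auto simp: l_def intro!: mult_left_mono)
    finally have "exp (- (\<kappa> * l)) * R s \<le> exp (- (\<kappa> * l)) * (exp (\<kappa> * l) * R x)" by simp
    then show ?thesis by (simp add: mult.assoc[symmetric] exp_add[symmetric])
  qed
  have Qlow: "S / \<rho> * (exp (- (\<kappa> * l)) * R s) \<le> Q x" if x: "x \<in> {s..t}" for x
  proof -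
    have "S / \<rho> \<le> f x" using hS[OF x] rho by (simp add: divide_le_eq mult.commute)
    then have "S / \<rho> * (exp (- (\<kappa> * l)) * R s) \<le> f x * R x"
      using lo[OF x] S rho Rs fpos[OF x] by (intro mult_mono) auto
    then show ?thesis using Q_eq[OF fpos[OF x]] by simp
  qed
  have IQ: "S / \<rho> * (exp (- (\<kappa> * l)) * R s) * l \<le> integral {s..t} Q"
  proof -
    define c where "c = S / \<rho> * (exp (- (\<kappa> * l)) * R s)"
    have A: "integral {s..t} (\<lambda>x. c) \<le> integral {s..t} Q"
      by (rule integral_le) (use Qlow int_on[OF Q_c st(1) st(3)] in \<open>auto simp: c_def\<close>)
    have B: "integral {s..t} (\<lambda>x. c) = c * l" using st by (simp add: l_def)
    have "c * l \<le> integral {s..t} Q" using A unfolding B .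
    then show ?thesis unfolding c_def .
  qed
  have jb: "e\<^sup>2 * \<bar>j x\<bar> \<le> e * (exp (\<kappa> * l) * R s) * sqrt S / 2" if x: "x \<in> {s..t}" for x
  proof -
    have "e\<^sup>2 * \<bar>j x\<bar> \<le> e * R x * sqrt (f x) / 2" by (rule j_end[OF fpos[OF x]])
    also have "\<dots> \<le> e * (exp (\<kappa> * l) * R s) * sqrt S / 2"
      using up[OF x] hS[OF x] e_pos R_nn[OF fpos[OF x]] fpos[OF x]
      by (intro divide_right_mono mult_mono mult_left_mono) auto
    finally show ?thesis .
  qed
  have jd: "e\<^sup>2 * (j t - j s) \<le> e * (exp (\<kappa> * l) * R s) * sqrt S"
  proof -
    have "j t - j s \<le> \<bar>j t\<bar> + \<bar>j s\<bar>" using abs_ge_self[of "j t"] abs_ge_minus_self[of "j s"] by linarith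
    then have "e\<^sup>2 * (j t - j s) \<le> e\<^sup>2 * (\<bar>j t\<bar> + \<bar>j s\<bar>)" by (rule mult_left_mono) simp
    then have "e\<^sup>2 * (j t - j s) \<le> e\<^sup>2 * \<bar>j t\<bar> + e\<^sup>2 * \<bar>j s\<bar>" unfolding distrib_left .
    then show ?thesis using jb[OF sJ] jb[OF tJ] by linarith
  qed
  have fwle: "integral {s..t} (\<lambda>x. f x * w x) \<le> S * integral {s..t} w"
  proof -
    have "integral {s..t} (\<lambda>x. f x * w x) \<le> integral {s..t} (\<lambda>x. S * w x)"
      by (rule integral_le) (use int_on[OF fw_c st(1) st(3)] int_on[OF w_c st(1) st(3)] hS w_nn
          in \<open>auto intro!: mult_right_mono integrable_on_mult_right\<close>)
    then show ?thesis by simp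
  qed
  have "S / \<rho> * (exp (- (\<kappa> * l)) * R s) * l / 2 - e * (exp (\<kappa> * l) * R s) * sqrt S / 2
      \<le> integral {s..t} Q / 2 - e\<^sup>2 * (j t - j s) / 2"
    using IQ jd by (intro diff_mono divide_right_mono) auto
  also have "\<dots> = integral {s..t} (\<lambda>x. f x * w x)" using bulk[OF st(1) less_imp_le[OF st(2)] st(3)] by simp
  also have "\<dots> \<le> S * integral {s..t} w" by (rule fwle)
  finally have main: "S / \<rho> * (exp (- (\<kappa> * l)) * R s) * l / 2 - e * (exp (\<kappa> * l) * R s) * sqrt S / 2
      \<le> S * integral {s..t} w" .
  have "S * (R s * (l * exp (- (\<kappa> * l)) / (2 * \<rho>) - e * exp (\<kappa> * l) / (2 * sqrt S)))
      = S / \<rho> * (exp (- (\<kappa> * l)) * R s) * l / 2 - e * (exp (\<kappa> * l) * R s) * sqrt S / 2"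
    by (rule alg1[OF S rho])
  also have "\<dots> \<le> S * integral {s..t} w" by (rule main)
  finally have "S * (R s * (l * exp (- (\<kappa> * l)) / (2 * \<rho>) - e * exp (\<kappa> * l) / (2 * sqrt S)))
      \<le> S * integral {s..t} w" .
  then have "R s * (l * exp (- (\<kappa> * l)) / (2 * \<rho>) - e * exp (\<kappa> * l) / (2 * sqrt S)) \<le> integral {s..t} w"
    using S by (rule mult_left_le_imp_le)
  then show ?thesis unfolding \<kappa>_def l_def .
qed


lemma core_est:
  assumes a: "0 \<le> aL" "aL \<le> s" "s < t" "t \<le> aR" "aR \<le> L"
    and tau: "\<tau> > 0" and rho: "\<rho> > 0" and mu: "\<mu> > 0" and B: "0 \<le> B"
    and h: "\<And>x. x \<in> {aL..aR} \<Longrightarrow> \<tau> \<le> f x \<and> \<bar>W' x\<bar> \<le> KK"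
    and hS: "\<And>x. x \<in> {s..t} \<Longrightarrow> f x \<le> S \<and> S \<le> \<rho> * f x"
    and left: "aL = 0 \<or> (f aL \<le> B \<and> (\<forall>x\<in>{0..aL}. W' x \<le> - \<mu>))"
    and right: "aR = L \<or> (f aR \<le> B \<and> (\<forall>x\<in>{aR..L}. W' x \<ge> \<mu>))"
    and X: "0 \<le> (t - s) * exp (- (KK / \<tau> * (t - s))) / (2 * \<rho>) - e * exp (KK / \<tau> * (t - s)) / (2 * sqrt S)"
  shows "((t - s) * exp (- (KK / \<tau> * (t - s))) / (2 * \<rho>) - e * exp (KK / \<tau> * (t - s)) / (2 * sqrt S))
      / (exp (KK / \<tau> * L) * (L + 2 * B / \<mu>)) \<le> integral {s..t} w"
proof -
  define X where "X = (t - s) * exp (- (KK / \<tau> * (t - s))) / (2 * \<rho>) - e * exp (KK / \<tau> * (t - s)) / (2 * sqrt S)"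
  define EE where "EE = exp (KK / \<tau> * L)"
  define r where "r = R s"
  have sI: "s \<in> {aL..aR}" using a by auto
  have KK: "0 \<le> KK" using h[OF sI] by (auto intro: order_trans[OF abs_ge_zero])
  have fpos: "0 < f x" if "x \<in> {aL..aR}" for x using h[OF that] tau by auto
  have r0: "0 \<le> r" unfolding r_def by (rule R_nn[OF fpos[OF sI]])
  have Rup: "R x \<le> EE * r" if x: "x \<in> {aL..aR}" for x
  proof -
    have "R x \<le> exp (KK / \<tau> * \<bar>x - s\<bar>) * R s" by (rule gronwall[OF a(1) a(5) tau h x sI])
    also have "\<dots> \<le> EE * r"
    proof -
      have d: "\<bar>x - s\<bar> \<le> L" using x a by auto
      have "KK / \<tau> * \<bar>x - s\<bar> \<le> KK / \<tau> * L" using d KK tau by (intro mult_left_mono) auto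
      then show ?thesis unfolding EE_def r_def using r0[unfolded r_def] by (intro mult_right_mono) auto
    qed
    finally show ?thesis .
  qed
  have E1p: "EE > 0" by (simp add: EE_def)
  have I1: "integral {0..aL} w \<le> B * (EE * r) / \<mu>"
  proof (cases "aL = 0")
    case True then show ?thesis using B E1p r0 mu by simp
  next
    case False
    with left have l: "f aL \<le> B" "\<forall>x\<in>{0..aL}. W' x \<le> - \<mu>" by auto
    have a1I: "aL \<in> {aL..aR}" using a by auto
    have "\<mu> * integral {0..aL} w \<le> Q aL" by (rule tail_left) (use a l in auto)
    also have "Q aL = f aL * R aL" by (rule Q_eq[OF fpos[OF a1I]])
    also have "\<dots> \<le> B * (EE * r)" using l Rup[OF a1I] R_nn[OF fpos[OF a1I]] B by (intro mult_mono) auto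
    finally show ?thesis using mu by (simp add: field_simps)
  qed
  have I3: "integral {aR..L} w \<le> B * (EE * r) / \<mu>"
  proof (cases "aR = L")
    case True then show ?thesis using B E1p r0 mu by simp
  next
    case False
    with right have l: "f aR \<le> B" "\<forall>x\<in>{aR..L}. W' x \<ge> \<mu>" by auto
    have a2I: "aR \<in> {aL..aR}" using a by auto
    have "\<mu> * integral {aR..L} w \<le> Q aR" by (rule tail_right) (use a l in auto)
    also have "Q aR = f aR * R aR" by (rule Q_eq[OF fpos[OF a2I]])
    also have "\<dots> \<le> B * (EE * r)" using l Rup[OF a2I] R_nn[OF fpos[OF a2I]] B by (intro mult_mono) auto
    finally show ?thesis using mu by (simp add: field_simps)
  qed
  have I2: "integral {aL..aR} w \<le> L * (EE * r)"
  proof -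
    have "integral {aL..aR} w \<le> integral {aL..aR} (\<lambda>x. EE * r)"
    proof (rule integral_le)
      show "w integrable_on {aL..aR}" by (rule int_on[OF w_c a(1) a(5)])
      fix x assume x: "x \<in> {aL..aR}"
      show "w x \<le> EE * r" using R_ge_w[OF fpos[OF x]] Rup[OF x] by linarith
    qed (rule integrable_continuous_interval, rule continuous_on_const)
    also have "\<dots> = (aR - aL) * (EE * r)" using a by simp
    also have "\<dots> \<le> L * (EE * r)" using a E1p r0 by (intro mult_right_mono) auto
    finally show ?thesis .
  qed
  have "1 = integral {0..aL} w + integral {aL..aR} w + integral {aR..L} w"
  proof -
    have "integral {0..aL} w + integral {aL..aR} w = integral {0..aR} w"
      using a int_on[OF w_c order_refl a(5)] by (intro Henstock_Kurzweil_Integration.integral_combine) auto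
    moreover have "integral {0..aR} w + integral {aR..L} w = integral {0..L} w"
      using a int_on[OF w_c order_refl order_refl] by (intro Henstock_Kurzweil_Integration.integral_combine) auto
    ultimately show ?thesis using w_tot by simp
  qed
  also have "\<dots> \<le> B * (EE * r) / \<mu> + L * (EE * r) + B * (EE * r) / \<mu>" using I1 I2 I3 by linarith
  also have "\<dots> = r * (EE * (L + 2 * B / \<mu>))" using mu by (simp add: field_simps)
  finally have one: "1 \<le> r * (EE * (L + 2 * B / \<mu>))" .
  have D: "0 < EE * (L + 2 * B / \<mu>)" using E1p L_pos B mu by (simp add: add_pos_nonneg)
  have low: "r * X \<le> integral {s..t} w" unfolding r_def X_def
    by (rule mass_lower) (use a tau rho h hS in auto)
  have "X / (EE * (L + 2 * B / \<mu>)) \<le> r * X"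
  proof -
    have "1 / (EE * (L + 2 * B / \<mu>)) \<le> r" using one D by (simp add: divide_le_eq)
    then have "X * (1 / (EE * (L + 2 * B / \<mu>))) \<le> X * r" using X unfolding X_def[symmetric]
      by (intro mult_left_mono) auto
    then show ?thesis by (simp add: mult.commute)
  qed
  with low show ?thesis unfolding X_def EE_def by simp
qed


end

locale vpot =
  fixes L x0 :: real and V V' :: "real \<Rightarrow> real"
  assumes L_pos: "0 < L"
    and V_d: "\<And>x. x \<in> {0..L} \<Longrightarrow> (V has_real_derivative V' x) (at x within {0..L})"
    and V'_c: "continuous_on {0..L} V'"
    and crit: "\<forall>x\<in>{0..L}. V' x = 0 \<longleftrightarrow> x = x0"
    and x0_in: "0 < x0" "x0 < L"
    and x0_min: "\<forall>x\<in>{0..L}. V x0 \<le> V x"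
begin

lemma V_c: "continuous_on {0..L} V"
  using V_d by (meson DERIV_continuous continuous_on_eq_continuous_within)

lemma ftcV: assumes "0 \<le> x" "x \<le> z" "z \<le> L" shows "(V' has_integral (V z - V x)) {x..z}"
  apply (rule fundamental_theorem_of_calculus[OF \<open>x \<le> z\<close>])
  unfolding has_real_derivative_iff_has_vector_derivative[symmetric]
  apply (rule has_field_derivative_subset[OF V_d])
  using assms by auto

lemma linV: assumes "0 \<le> x" "x \<le> z" "z \<le> L" "\<And>u. u \<in> {x..z} \<Longrightarrow> m \<le> V' u"
  shows "m * (z - x) \<le> V z - V x"
proof -
  have "((\<lambda>u. m) has_integral (z - x) * m) {x..z}" using has_integral_const_real[of m x z] assms by simp
  from has_integral_le[OF this ftcV[OF assms(1-3)]] assms(4) show ?thesis by (simp add: mult.commute)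
qed

lemma linV': assumes "0 \<le> x" "x \<le> z" "z \<le> L" "\<And>u. u \<in> {x..z} \<Longrightarrow> V' u \<le> - m"
  shows "V z - V x \<le> - m * (z - x)"
proof -
  have "((\<lambda>u. - m) has_integral (z - x) * (- m)) {x..z}" using has_integral_const_real[of "-m" x z] assms by simp
  from has_integral_le[OF ftcV[OF assms(1-3)] this] assms(4) show ?thesis by (simp add: mult.commute)
qed

lemma sign_pos: assumes x1: "x0 < x1" "x1 \<le> L" shows "0 < V' x1"
proof (rule ccontr)
  assume "\<not> 0 < V' x1"
  moreover have "V' x1 \<noteq> 0" using crit x1 x0_in by auto
  ultimately have neg: "V' x1 < 0" by simp
  have allneg: "V' u < 0" if u: "x0 < u" "u \<le> x1" for u
  proof (rule ccontr)
    assume "\<not> V' u < 0"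
    then have "0 \<le> V' u" by simp
    then obtain z where z: "u \<le> z" "z \<le> x1" "V' z = 0"
      using IVT2'[of V' x1 0 u] neg u continuous_on_subset[OF V'_c, of "{u..x1}"] x0_in x1 by force
    then show False using crit x0_in x1 u by force
  qed
  define c where "c = (x0 + x1) / 2"
  have c: "x0 < c" "c < x1" using x1 by (auto simp: c_def)
  obtain xm where xm: "xm \<in> {c..x1}" "\<forall>y\<in>{c..x1}. V' y \<le> V' xm"
    using continuous_attains_sup[of "{c..x1}" V'] continuous_on_subset[OF V'_c, of "{c..x1}"] c x0_in x1 by force
  have mneg: "V' xm < 0" using allneg xm c by auto
  have "V x1 - V c \<le> - (- V' xm) * (x1 - c)"
    by (rule linV') (use c x0_in x1 xm in auto)
  moreover have "V c - V x0 \<le> - 0 * (c - x0)"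
  proof (rule linV')
    fix u assume "u \<in> {x0..c}"
    then show "V' u \<le> - 0" using allneg[of u] crit x0_in c by (cases "u = x0") auto
  qed (use c x0_in x1 in auto)
  moreover have "0 < (- V' xm) * (x1 - c)" using mneg c by (intro mult_pos_pos) auto
  ultimately have "V x1 < V x0" by simp
  moreover have "V x0 \<le> V x1" using x0_min x1 x0_in by auto
  ultimately show False by linarith
qed

lemma sign_neg: assumes x1: "0 \<le> x1" "x1 < x0" shows "V' x1 < 0"
proof (rule ccontr)
  assume "\<not> V' x1 < 0"
  moreover have "V' x1 \<noteq> 0" using crit x1 x0_in by auto
  ultimately have pos: "V' x1 > 0" by simp
  have allpos: "V' u > 0" if u: "x1 \<le> u" "u < x0" for u
  proof (rule ccontr)
    assume "\<not> V' u > 0"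
    then have "V' u \<le> 0" by simp
    then obtain z where z: "x1 \<le> z" "z \<le> u" "V' z = 0"
      using IVT2'[of V' u 0 x1] pos u continuous_on_subset[OF V'_c, of "{x1..u}"] x0_in x1 by force
    then show False using crit x0_in x1 u by force
  qed
  define c where "c = (x0 + x1) / 2"
  have c: "x1 < c" "c < x0" using x1 by (auto simp: c_def)
  obtain xm where xm: "xm \<in> {x1..c}" "\<forall>y\<in>{x1..c}. V' xm \<le> V' y"
    using continuous_attains_inf[of "{x1..c}" V'] continuous_on_subset[OF V'_c, of "{x1..c}"] c x0_in x1 by force
  have mpos: "V' xm > 0" using allpos xm c by auto
  have "V' xm * (c - x1) \<le> V c - V x1"
    by (rule linV) (use c x0_in x1 xm in auto)
  moreover have "0 * (x0 - c) \<le> V x0 - V c"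
  proof (rule linV)
    fix u assume "u \<in> {c..x0}"
    then show "0 \<le> V' u" using allpos[of u] crit x0_in c by (cases "u = x0") (auto intro: less_imp_le)
  qed (use c x0_in x1 in auto)
  moreover have "0 < V' xm * (c - x1)" using mpos c by (intro mult_pos_pos) auto
  ultimately have "V x1 < V x0" by linarith
  then show False using x0_min x1 x0_in by force
qed

lemma Vp_ge0: "x0 \<le> x \<Longrightarrow> x \<le> L \<Longrightarrow> 0 \<le> V' x"
  using sign_pos[of x] crit x0_in by (cases "x = x0") (auto intro: less_imp_le)

lemma Vp_le0: "0 \<le> x \<Longrightarrow> x \<le> x0 \<Longrightarrow> V' x \<le> 0"
  using sign_neg[of x] crit x0_in by (cases "x = x0") (auto intro: less_imp_le)

lemma mon_pos: assumes "x0 \<le> x" "x \<le> z" "z \<le> L" shows "V x \<le> V z"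
  using linV[of x z 0] assms Vp_ge0 x0_in by force

lemma mon_neg: assumes "0 \<le> x" "x \<le> z" "z \<le> x0" shows "V z \<le> V x"
  using linV'[of x z 0] assms Vp_le0 x0_in by force

lemma slope_pos: assumes "x0 < c" "c \<le> L" shows "\<exists>m>0. \<forall>x\<in>{c..L}. m \<le> V' x"
proof -
  obtain xm where xm: "xm \<in> {c..L}" "\<forall>y\<in>{c..L}. V' xm \<le> V' y"
    using continuous_attains_inf[of "{c..L}" V'] continuous_on_subset[OF V'_c, of "{c..L}"] assms x0_in by force
  then show ?thesis using sign_pos[of xm] assms by auto
qed

lemma slope_neg: assumes "0 \<le> c" "c < x0" shows "\<exists>m>0. \<forall>x\<in>{0..c}. V' x \<le> - m"
proof -
  obtain xm where xm: "xm \<in> {0..c}" "\<forall>y\<in>{0..c}. V' y \<le> V' xm"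
    using continuous_attains_sup[of "{0..c}" V'] continuous_on_subset[OF V'_c, of "{0..c}"] assms x0_in by force
  then show ?thesis using sign_neg[of xm] assms by (intro exI[of _ "- V' xm"]) auto
qed

lemma gap: assumes r: "r > 0" shows "\<exists>d>0. \<forall>x\<in>{0..L}. r \<le> \<bar>x - x0\<bar> \<longrightarrow> V x0 + d \<le> V x"
proof -
  have right: "\<exists>d>0. \<forall>x\<in>{0..L}. x0 + r \<le> x \<longrightarrow> V x0 + d \<le> V x"
  proof (cases "x0 + r \<le> L")
    case True
    obtain m where m: "m > 0" "\<forall>x\<in>{x0 + r/2..L}. m \<le> V' x" using slope_pos[of "x0 + r/2"] True r by auto
    have "m * (x0 + r - (x0 + r/2)) \<le> V (x0 + r) - V (x0 + r/2)"
      by (rule linV) (use m True r x0_in in auto)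
    moreover have "V x0 \<le> V (x0 + r/2)" by (rule mon_pos) (use True r in auto)
    ultimately have "V x0 + m * (r/2) \<le> V (x0 + r)" by simp
    moreover have "V (x0 + r) \<le> V x" if "x \<in> {0..L}" "x0 + r \<le> x" for x
      by (rule mon_pos) (use that r in auto)
    ultimately show ?thesis using m r by (intro exI[of _ "m * (r/2)"]) force
  qed (auto intro: exI[of _ 1])
  have left: "\<exists>d>0. \<forall>x\<in>{0..L}. x \<le> x0 - r \<longrightarrow> V x0 + d \<le> V x"
  proof (cases "0 \<le> x0 - r")
    case True
    obtain m where m: "m > 0" "\<forall>x\<in>{0..x0 - r/2}. V' x \<le> - m" using slope_neg[of "x0 - r/2"] True r by auto
    have "V (x0 - r/2) - V (x0 - r) \<le> - m * (x0 - r/2 - (x0 - r))"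
      by (rule linV') (use m True r x0_in in auto)
    moreover have "V x0 \<le> V (x0 - r/2)" by (rule mon_neg) (use True r in auto)
    ultimately have "V x0 + m * (r/2) \<le> V (x0 - r)" by simp
    moreover have "V (x0 - r) \<le> V x" if "x \<in> {0..L}" "x \<le> x0 - r" for x
      by (rule mon_neg) (use that r in auto)
    ultimately show ?thesis using m r by (intro exI[of _ "m * (r/2)"]) force
  qed (auto intro: exI[of _ 1])
  obtain d1 d2 where d: "d1 > 0" "d2 > 0" "\<forall>x\<in>{0..L}. x0 + r \<le> x \<longrightarrow> V x0 + d1 \<le> V x"
    "\<forall>x\<in>{0..L}. x \<le> x0 - r \<longrightarrow> V x0 + d2 \<le> V x" using left right by blast
  show ?thesis
  proof (intro exI[of _ "min d1 d2"] conjI ballI impI)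
    fix x assume x: "x \<in> {0..L}" "r \<le> \<bar>x - x0\<bar>"
    then have "x0 + r \<le> x \<or> x \<le> x0 - r" by auto
    then show "V x0 + min d1 d2 \<le> V x" using d x by force
  qed (use d in auto)
qed

end
context sol begin

lemma tail_mass_right:
  assumes bb: "0 \<le> bb" "bb < hi" "hi \<le> L" and c: "c > 0"
    and fneg: "\<And>x. x \<in> {bb..L} \<Longrightarrow> f x \<le> - c"
  shows "integral {hi..L} w \<le> e\<^sup>2 * w bb / (2 * c * (hi - bb))"
proof -
  have ag: "2 * c / e\<^sup>2 * integral {bb..L} (\<lambda>x. (x - bb) * w x) \<le> w bb" by (rule agmon_right) (use bb c fneg in auto)
  have cc: "continuous_on {0..L} (\<lambda>x. (x - bb) * w x)" using w_c by (intro continuous_intros)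
  have "integral {hi..L} w \<le> integral {hi..L} (\<lambda>x. (x - bb) * w x / (hi - bb))"
  proof (rule integral_le)
    show "w integrable_on {hi..L}" by (rule int_on[OF w_c]) (use bb in auto)
    show "(\<lambda>x. (x - bb) * w x / (hi - bb)) integrable_on {hi..L}"
      by (rule integrable_on_divide, rule int_on[OF cc]) (use bb in auto)
    fix x assume x: "x \<in> {hi..L}"
    have "1 * w x \<le> (x - bb) / (hi - bb) * w x" using x bb w_nn[of x] by (intro mult_right_mono) auto
    then show "w x \<le> (x - bb) * w x / (hi - bb)" by simp
  qed
  also have "\<dots> = integral {hi..L} (\<lambda>x. (x - bb) * w x) / (hi - bb)" by (simp add: integral_divide)
  also have "integral {hi..L} (\<lambda>x. (x - bb) * w x) \<le> integral {bb..L} (\<lambda>x. (x - bb) * w x)"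
    by (rule integral_subset_le) (use bb w_nn in \<open>auto intro!: int_on[OF cc]\<close>)
  then have "integral {hi..L} (\<lambda>x. (x - bb) * w x) / (hi - bb) \<le> integral {bb..L} (\<lambda>x. (x - bb) * w x) / (hi - bb)"
    using bb by (simp add: divide_right_mono)
  also have "integral {bb..L} (\<lambda>x. (x - bb) * w x) \<le> e\<^sup>2 * w bb / (2 * c)"
    using ag e_pos c by (simp add: field_simps)
  then have "integral {bb..L} (\<lambda>x. (x - bb) * w x) / (hi - bb) \<le> e\<^sup>2 * w bb / (2 * c) / (hi - bb)"
    by (rule divide_right_mono) (use bb in simp)
  finally show ?thesis by simp
qed

lemma tail_mass_left:
  assumes aa: "0 \<le> lo" "lo < aa" "aa \<le> L" and c: "c > 0"
    and fneg: "\<And>x. x \<in> {0..aa} \<Longrightarrow> f x \<le> - c"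
  shows "integral {0..lo} w \<le> e\<^sup>2 * w aa / (2 * c * (aa - lo))"
proof -
  have ag: "2 * c / e\<^sup>2 * integral {0..aa} (\<lambda>x. (aa - x) * w x) \<le> w aa" by (rule agmon_left) (use aa c fneg in auto)
  have cc: "continuous_on {0..L} (\<lambda>x. (aa - x) * w x)" using w_c by (intro continuous_intros)
  have "integral {0..lo} w \<le> integral {0..lo} (\<lambda>x. (aa - x) * w x / (aa - lo))"
  proof (rule integral_le)
    show "w integrable_on {0..lo}" by (rule int_on[OF w_c]) (use aa in auto)
    show "(\<lambda>x. (aa - x) * w x / (aa - lo)) integrable_on {0..lo}"
      by (rule integrable_on_divide, rule int_on[OF cc]) (use aa in auto)
    fix x assume x: "x \<in> {0..lo}"
    have "1 * w x \<le> (aa - x) / (aa - lo) * w x" using x aa w_nn[of x] by (intro mult_right_mono) auto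
    then show "w x \<le> (aa - x) * w x / (aa - lo)" by simp
  qed
  also have "\<dots> = integral {0..lo} (\<lambda>x. (aa - x) * w x) / (aa - lo)" by (simp add: integral_divide)
  also have "integral {0..lo} (\<lambda>x. (aa - x) * w x) \<le> integral {0..aa} (\<lambda>x. (aa - x) * w x)"
    by (rule integral_subset_le) (use aa w_nn in \<open>auto intro!: int_on[OF cc]\<close>)
  then have "integral {0..lo} (\<lambda>x. (aa - x) * w x) / (aa - lo) \<le> integral {0..aa} (\<lambda>x. (aa - x) * w x) / (aa - lo)"
    using aa by (simp add: divide_right_mono)
  also have "integral {0..aa} (\<lambda>x. (aa - x) * w x) \<le> e\<^sup>2 * w aa / (2 * c)"
    using ag e_pos c by (simp add: field_simps)
  then have "integral {0..aa} (\<lambda>x. (aa - x) * w x) / (aa - lo) \<le> e\<^sup>2 * w aa / (2 * c) / (aa - lo)"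
    by (rule divide_right_mono) (use aa in simp)
  finally show ?thesis by simp
qed

end

context sol begin

lemma mass_split:
  assumes "0 \<le> lo" "lo \<le> hi" "hi \<le> L"
  shows "integral {0..lo} w + integral {lo..hi} w + integral {hi..L} w = 1"
proof -
  have "integral {0..lo} w + integral {lo..hi} w = integral {0..hi} w"
    using assms int_on[OF w_c order_refl assms(3)] by (intro Henstock_Kurzweil_Integration.integral_combine) auto
  moreover have "integral {0..hi} w + integral {hi..L} w = integral {0..L} w"
    using assms int_on[OF w_c order_refl order_refl] by (intro Henstock_Kurzweil_Integration.integral_combine) auto
  ultimately show ?thesis using w_tot by simp
qed

lemma partG:
  fixes V :: "real \<Rightarrow> real" and xc \<nu> \<delta> y :: real
  assumes xc: "0 < xc" "xc < L" and nu: "\<nu> > 0" and d: "0 < \<delta>" "\<delta> \<le> 1"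
    and vmin: "\<forall>x\<in>{0..L}. V xc \<le> V x"
    and gap: "\<forall>x\<in>{0..L}. \<nu> / 3 \<le> \<bar>x - xc\<bar> \<longrightarrow> V xc + 4 * \<delta> \<le> V x"
    and qb: "\<forall>x\<in>{0..L}. \<bar>W x - V x\<bar> \<le> \<delta>"
    and EG: "E \<le> V xc + \<delta>"
    and y: "y \<in> {0..L}" "V y \<le> E + \<delta>"
    and esmall: "e \<le> \<nu> * \<delta> / 18"
  shows "\<exists>s t. s < t \<and> {s..t} \<subseteq> {y - \<nu><..<y + \<nu>} \<inter> {0..L} \<and> 1/2 \<le> integral {s..t} w"
proof -
  define lo where "lo = max 0 (xc - \<nu>/2)"
  define hi where "hi = min L (xc + \<nu>/2)"
  have yx: "\<bar>y - xc\<bar> < \<nu> / 3"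
  proof (rule ccontr)
    assume "\<not> \<bar>y - xc\<bar> < \<nu> / 3"
    then have "V xc + 4 * \<delta> \<le> V y" using gap y by auto
    then show False using y EG d by linarith
  qed
  have lohi: "0 \<le> lo" "lo < hi" "hi \<le> L" using xc nu by (auto simp: lo_def hi_def)
  have yx2: "xc - \<nu>/3 < y" "y < xc + \<nu>/3" using abs_less_iff[of "y - xc" "\<nu>/3"] yx by linarith+
  have sub: "{lo..hi} \<subseteq> {y - \<nu><..<y + \<nu>} \<inter> {0..L}" using yx2 nu lohi by (auto simp: lo_def hi_def)
  have fle: "f x \<le> 2 * \<delta>" if "x \<in> {0..L}" for x using qb vmin EG that unfolding f_def by force
  have P: "integral {0..L} p \<le> 2 * \<delta> / e\<^sup>2"
  proof -
    have "integral {0..L} (\<lambda>x. f x * w x) \<le> integral {0..L} (\<lambda>x. 2 * \<delta> * w x)"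
      by (rule integral_le) (use fle w_nn in \<open>auto intro!: int_on fw_c w_c integrable_on_mult_right mult_right_mono\<close>)
    also have "\<dots> = 2 * \<delta>" using w_tot by simp
    finally have "e\<^sup>2 * integral {0..L} p \<le> 2 * \<delta>" using energy by simp
    then show ?thesis using e_pos by (simp add: field_simps)
  qed
  have wb: "w x \<le> 3 / e" if x: "x \<in> {0..L}" for x
  proof -
    have "w x \<le> 1 / e + integral {0..L} p / (1 / e)" by (rule sup_bound) (use e_pos x in auto)
    also have "integral {0..L} p / (1 / e) \<le> 2 * \<delta> / e\<^sup>2 * e" using mult_right_mono[OF P, of e] e_pos by simp
    also have "2 * \<delta> / e\<^sup>2 * e = 2 * \<delta> / e" by (simp add: power2_eq_square)
    finally have "w x \<le> 1 / e + 2 * \<delta> / e" by simp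
    also have "\<dots> \<le> 3 / e" using d e_pos by (simp add: field_simps)
    finally show ?thesis .
  qed
  have small: "e\<^sup>2 * (3 / e) / (2 * (2 * \<delta>) * (\<nu> / 6)) \<le> 1 / 4"
  proof -
    have "e\<^sup>2 * (3 / e) / (2 * (2 * \<delta>) * (\<nu> / 6)) = 9 * e / (2 * \<nu> * \<delta>)" using e_pos by (simp add: field_simps power2_eq_square)
    also have "\<dots> \<le> 1 / 4" using esmall nu d e_pos by (simp add: field_simps)
    finally show ?thesis .
  qed
  have R: "integral {hi..L} w \<le> 1 / 4"
  proof (cases "hi = L")
    case True then show ?thesis by simp
  next
    case False
    then have hi: "hi = xc + \<nu>/2" "xc + \<nu>/2 < L" by (auto simp: hi_def)
    define bb where "bb = xc + \<nu>/3"
    have "integral {hi..L} w \<le> e\<^sup>2 * w bb / (2 * (2 * \<delta>) * (hi - bb))"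
    proof (rule tail_mass_right)
      fix x assume x: "x \<in> {bb..L}"
      then have "V xc + 4 * \<delta> \<le> V x" using gap xc nu by (auto simp: bb_def)
      moreover have "x \<in> {0..L}" using x xc nu by (auto simp: bb_def)
      then have "\<bar>W x - V x\<bar> \<le> \<delta>" using qb by blast
      ultimately show "f x \<le> - (2 * \<delta>)" using EG unfolding f_def abs_le_iff by auto
    qed (use hi xc nu d in \<open>auto simp: bb_def\<close>)
    also have "hi - bb = \<nu> / 6" using hi by (simp add: bb_def)
    also have "e\<^sup>2 * w bb / (2 * (2 * \<delta>) * (\<nu> / 6)) \<le> e\<^sup>2 * (3 / e) / (2 * (2 * \<delta>) * (\<nu> / 6))"
      by (intro divide_right_mono mult_left_mono wb) (use hi xc nu d in \<open>auto simp: bb_def\<close>)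
    finally show ?thesis using small by linarith
  qed
  have Lf: "integral {0..lo} w \<le> 1 / 4"
  proof (cases "lo = 0")
    case True then show ?thesis by simp
  next
    case False
    then have lo: "lo = xc - \<nu>/2" "0 < xc - \<nu>/2" by (auto simp: lo_def)
    define aa where "aa = xc - \<nu>/3"
    have "integral {0..lo} w \<le> e\<^sup>2 * w aa / (2 * (2 * \<delta>) * (aa - lo))"
    proof (rule tail_mass_left)
      fix x assume x: "x \<in> {0..aa}"
      then have "V xc + 4 * \<delta> \<le> V x" using gap xc nu by (auto simp: aa_def)
      moreover have "x \<in> {0..L}" using x xc nu by (auto simp: aa_def)
      then have "\<bar>W x - V x\<bar> \<le> \<delta>" using qb by blast
      ultimately show "f x \<le> - (2 * \<delta>)" using EG unfolding f_def abs_le_iff by auto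
    qed (use lo xc nu d in \<open>auto simp: aa_def\<close>)
    also have "aa - lo = \<nu> / 6" using lo by (simp add: aa_def)
    also have "e\<^sup>2 * w aa / (2 * (2 * \<delta>) * (\<nu> / 6)) \<le> e\<^sup>2 * (3 / e) / (2 * (2 * \<delta>) * (\<nu> / 6))"
      by (intro divide_right_mono mult_left_mono wb) (use lo xc nu d in \<open>auto simp: aa_def\<close>)
    finally show ?thesis using small by linarith
  qed
  have "1/2 \<le> integral {lo..hi} w" using mass_split[of lo hi] lohi R Lf by linarith
  then show ?thesis using lohi sub by blast
qed

end

context sol begin

lemma partH:
  fixes V V' :: "real \<Rightarrow> real" and xc \<nu> \<delta> \<eta> \<eta>' m tz M K y :: real
  assumes xc: "0 < xc" "xc < L" and nu: "\<nu> > 0" and d: "\<delta> > 0" and m: "m > 0"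
    and t0: "tz > 0" "tz \<le> \<delta>/2" "tz \<le> m * \<nu> / 8"
    and Vc: "continuous_on {0..L} V"
    and monp: "\<And>x z. xc \<le> x \<Longrightarrow> x \<le> z \<Longrightarrow> z \<le> L \<Longrightarrow> V x \<le> V z"
    and monn: "\<And>x z. 0 \<le> x \<Longrightarrow> x \<le> z \<Longrightarrow> z \<le> xc \<Longrightarrow> V z \<le> V x"
    and linp: "\<And>x z. xc + \<eta> \<le> x \<Longrightarrow> x \<le> z \<Longrightarrow> z \<le> L \<Longrightarrow> m * (z - x) \<le> V z - V x"
    and linn: "\<And>x z. 0 \<le> x \<Longrightarrow> x \<le> z \<Longrightarrow> z \<le> xc - \<eta> \<Longrightarrow> m * (z - x) \<le> V x - V z"
    and Vpp: "\<And>x. x \<in> {xc + \<eta>..L} \<Longrightarrow> m \<le> V' x"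
    and Vpn: "\<And>x. x \<in> {0..xc - \<eta>} \<Longrightarrow> V' x \<le> - m"
    and eta: "\<And>x. x \<in> {0..L} \<Longrightarrow> V xc + \<delta>/2 \<le> V x \<Longrightarrow> \<eta> \<le> \<bar>x - xc\<bar>"
    and eta': "\<eta>' > 0" "0 \<le> xc - \<eta>'" "xc + \<eta>' \<le> L" "\<And>x. \<bar>x - xc\<bar> \<le> \<eta>' \<Longrightarrow> V x \<le> V xc + \<delta>/4"
    and K: "\<And>x. x \<in> {0..L} \<Longrightarrow> \<bar>V' x\<bar> \<le> K" and M: "\<And>x. x \<in> {0..L} \<Longrightarrow> \<bar>V x\<bar> \<le> M"
    and qb: "\<And>x. x \<in> {0..L} \<Longrightarrow> \<bar>W x - V x\<bar> \<le> tz/2" "\<And>x. x \<in> {0..L} \<Longrightarrow> \<bar>W x - V x\<bar> \<le> 1"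
    and qb': "\<And>x. x \<in> {0..L} \<Longrightarrow> \<bar>W' x - V' x\<bar> \<le> m/2" "\<And>x. x \<in> {0..L} \<Longrightarrow> \<bar>W' x - V' x\<bar> \<le> 1"
    and EH: "V xc + \<delta> \<le> E"
    and y: "y \<in> {0..L}" "V y \<le> E + tz"
  defines "\<tau> \<equiv> tz / 2" and "l \<equiv> min (\<nu>/4) \<eta>'" and "\<kappa> \<equiv> (K + 1) / (tz / 2)" and "\<rho> \<equiv> 1 + 4 * (M + 1) / (tz / 2)"
  assumes esmall: "e \<le> l * exp (- (2 * \<kappa> * l)) * sqrt \<tau> / (2 * \<rho>)"
  shows "\<exists>s t. s < t \<and> {s..t} \<subseteq> {y - \<nu><..<y + \<nu>} \<inter> {0..L} \<and>
     (l * exp (- (\<kappa> * l)) / (4 * \<rho>)) / (exp (\<kappa> * L) * (L + 2 * (3 * \<tau>) / (m / 2))) \<le> integral {s..t} w"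
proof -
  have tau: "\<tau> > 0" using t0 by (simp add: \<tau>_def)
  have kap: "\<kappa> = (K + 1) / \<tau>" by (simp add: \<kappa>_def \<tau>_def)
  have rhod: "\<rho> = 1 + 4 * (M + 1) / \<tau>" by (simp add: \<rho>_def \<tau>_def)
  have lpos: "l > 0" using nu eta' by (simp add: l_def)
  have K0: "0 \<le> K" using K[of 0] L_pos by (auto intro: order_trans[OF abs_ge_zero])
  have M0: "0 \<le> M" using M[of 0] L_pos by (auto intro: order_trans[OF abs_ge_zero])
  have rho: "\<rho> \<ge> 1" using M0 tau by (simp add: rhod)
  have thr: "V xc \<le> E - tz" using EH t0 d by linarith
  obtain a2 where a2: "xc \<le> a2" "a2 \<le> L" "\<forall>x\<in>{xc..a2}. V x \<le> E - tz" "a2 < L \<longrightarrow> V a2 = E - tz"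
  proof (cases "V L \<le> E - tz")
    case True
    have "\<forall>x\<in>{xc..L}. V x \<le> E - tz" using True monp[of _ L] by force
    then show ?thesis by (intro that[of L]) (use xc in auto)
  next
    case False
    obtain z where z: "xc \<le> z" "z \<le> L" "V z = E - tz"
      using IVT'[of V xc "E - tz" L] thr False xc continuous_on_subset[OF Vc, of "{xc..L}"] by force
    have "\<forall>x\<in>{xc..z}. V x \<le> E - tz" using z monp[of _ z] by force
    then show ?thesis by (intro that[of z]) (use z in auto)
  qed
  obtain a1 where a1: "0 \<le> a1" "a1 \<le> xc" "\<forall>x\<in>{a1..xc}. V x \<le> E - tz" "0 < a1 \<longrightarrow> V a1 = E - tz"
  proof (cases "V 0 \<le> E - tz")
    case True
    have "\<forall>x\<in>{0..xc}. V x \<le> E - tz" using True monn[of 0 _] by force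
    then show ?thesis by (intro that[of 0]) (use xc in auto)
  next
    case False
    obtain z where z: "0 \<le> z" "z \<le> xc" "V z = E - tz"
      using IVT2'[of V xc "E - tz" 0] thr False xc continuous_on_subset[OF Vc, of "{0..xc}"] by force
    have "\<forall>x\<in>{z..xc}. V x \<le> E - tz" using z monn[of z _] by force
    then show ?thesis by (intro that[of z]) (use z in auto)
  qed
  have inI: "V x \<le> E - tz" if "x \<in> {a1..a2}" for x
    using a1(3) a2(3) that by (cases "x \<le> xc") auto
  have Isub: "{a1..a2} \<subseteq> {0..L}" using a1 a2 by auto
  have hI: "\<tau> \<le> f x \<and> \<bar>W' x\<bar> \<le> K + 1" if x: "x \<in> {a1..a2}" for x
  proof
    have "x \<in> {0..L}" using x Isub by auto
    then have "\<bar>W x - V x\<bar> \<le> tz/2" "\<bar>W' x - V' x\<bar> \<le> 1" "\<bar>V' x\<bar> \<le> K" using qb qb' K by auto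
    then show "\<tau> \<le> f x" "\<bar>W' x\<bar> \<le> K + 1" using inI[OF x] unfolding f_def \<tau>_def abs_le_iff by auto
  qed
  have a2big: "xc + \<eta>' \<le> a2"
  proof (rule ccontr)
    assume "\<not> xc + \<eta>' \<le> a2"
    then have lt: "a2 < xc + \<eta>'" by simp
    then have "a2 < L" using eta' by linarith
    then have "V a2 = E - tz" using a2 by auto
    moreover have "V a2 \<le> V xc + \<delta>/4" using eta'(4)[of a2] lt a2 eta' by auto
    ultimately show False using EH t0 d by linarith
  qed
  have a1small: "a1 \<le> xc - \<eta>'"
  proof (rule ccontr)
    assume "\<not> a1 \<le> xc - \<eta>'"
    then have lt: "xc - \<eta>' < a1" by simp
    then have "0 < a1" using eta' by linarith
    then have "V a1 = E - tz" using a1 by auto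
    moreover have "V a1 \<le> V xc + \<delta>/4" using eta'(4)[of a1] lt a1 eta' by auto
    ultimately show False using EH t0 d by linarith
  qed
  have right: "a2 = L \<or> (f a2 \<le> 3 * \<tau> \<and> (\<forall>x\<in>{a2..L}. W' x \<ge> m / 2))"
  proof (cases "a2 = L")
    case False
    then have "a2 < L" using a2 by auto
    then have Va2: "V a2 = E - tz" using a2 by auto
    have "\<eta> \<le> \<bar>a2 - xc\<bar>" using eta[of a2] Va2 a2 xc EH t0 by auto
    then have a2e: "xc + \<eta> \<le> a2" using a2 by auto
    have "f a2 \<le> 3 * \<tau>" using qb(1)[of a2] Va2 a2 xc unfolding f_def \<tau>_def abs_le_iff by auto
    moreover have "\<forall>x\<in>{a2..L}. W' x \<ge> m / 2"
    proof
      fix x assume x: "x \<in> {a2..L}"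
      then have "m \<le> V' x" "\<bar>W' x - V' x\<bar> \<le> m/2" using Vpp[of x] qb'(1)[of x] a2e a2 xc by auto
      then show "W' x \<ge> m / 2" unfolding abs_le_iff by auto
    qed
    ultimately show ?thesis by auto
  qed simp
  have left: "a1 = 0 \<or> (f a1 \<le> 3 * \<tau> \<and> (\<forall>x\<in>{0..a1}. W' x \<le> - (m / 2)))"
  proof (cases "a1 = 0")
    case False
    then have "0 < a1" using a1 by auto
    then have Va1: "V a1 = E - tz" using a1 by auto
    have "\<eta> \<le> \<bar>a1 - xc\<bar>" using eta[of a1] Va1 a1 xc EH t0 by auto
    then have a1e: "a1 \<le> xc - \<eta>" using a1 by auto
    have "f a1 \<le> 3 * \<tau>" using qb(1)[of a1] Va1 a1 xc unfolding f_def \<tau>_def abs_le_iff by auto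
    moreover have "\<forall>x\<in>{0..a1}. W' x \<le> - (m / 2)"
    proof
      fix x assume x: "x \<in> {0..a1}"
      then have "V' x \<le> - m" "\<bar>W' x - V' x\<bar> \<le> m/2" using Vpn[of x] qb'(1)[of x] a1e a1 xc by auto
      then show "W' x \<le> - (m / 2)" unfolding abs_le_iff by auto
    qed
    ultimately show ?thesis by auto
  qed simp
  have lle: "l \<le> \<eta>'" "l \<le> \<nu>/4" by (auto simp: l_def)
  obtain s where s: "a1 \<le> s" "s + l \<le> a2" "{s..s + l} \<subseteq> {y - \<nu><..<y + \<nu>}"
  proof -
    consider "a2 < y" | "y < a1" | "a1 \<le> y" "y \<le> a2" by linarith
    then show ?thesis
    proof cases
      case 1
      then have "a2 < L" using y by auto
      then have Va2: "V a2 = E - tz" using a2 by auto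
      have "\<eta> \<le> \<bar>a2 - xc\<bar>" using eta[of a2] Va2 a2 xc EH t0 by auto
      then have a2e: "xc + \<eta> \<le> a2" using a2 by auto
      have "m * (y - a2) \<le> V y - V a2" by (rule linp) (use a2e 1 y in auto)
      also have "\<dots> \<le> m * (\<nu> / 4)" using Va2 y t0 by auto
      finally have "y - a2 \<le> \<nu> / 4" using m by simp
      then show ?thesis using 1 lle a1small a2big nu lpos eta' by (intro that[of "a2 - l"]) auto
    next
      case 2
      then have "0 < a1" using y by auto
      then have Va1: "V a1 = E - tz" using a1 by auto
      have "\<eta> \<le> \<bar>a1 - xc\<bar>" using eta[of a1] Va1 a1 xc EH t0 by auto
      then have a1e: "a1 \<le> xc - \<eta>" using a1 by auto
      have "m * (a1 - y) \<le> V y - V a1" by (rule linn) (use a1e 2 y in auto)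
      also have "\<dots> \<le> m * (\<nu> / 4)" using Va1 y t0 by auto
      finally have "a1 - y \<le> \<nu> / 4" using m by simp
      then show ?thesis using 2 lle a1small a2big nu lpos eta' by (intro that[of a1]) auto
    next
      case 3
      show ?thesis
      proof (cases "y + l \<le> a2")
        case True
        then show ?thesis using 3 lle nu lpos by (intro that[of y]) auto
      next
        case False
        then show ?thesis using 3 lle nu a1small a2big lpos eta' by (intro that[of "y - l"]) auto
      qed
    qed
  qed
  define t where "t = s + l"
  have st: "s < t" "t - s = l" using lpos by (auto simp: t_def)
  define S where "S = f s + 2 * (M + 1)"
  have sI: "s \<in> {a1..a2}" using s lpos by auto
  have Wb: "\<bar>W x\<bar> \<le> M + 1" if "x \<in> {0..L}" for x using qb(2)[OF that] M[OF that] by linarith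
  have hS: "f x \<le> S \<and> S \<le> \<rho> * f x" if x: "x \<in> {s..t}" for x
  proof
    have xI: "x \<in> {a1..a2}" using x s by (auto simp: t_def)
    have ws: "\<bar>W s\<bar> \<le> M + 1" "\<bar>W x\<bar> \<le> M + 1" using Wb Isub sI xI by auto
    show "f x \<le> S" using ws unfolding S_def f_def abs_le_iff by auto
    have fx: "\<tau> \<le> f x" using hI[OF xI] by auto
    have "S \<le> f x + 4 * (M + 1)" using ws unfolding S_def f_def abs_le_iff by auto
    also have "4 * (M + 1) = (\<rho> - 1) * \<tau>" using tau by (simp add: rhod)
    also have "(\<rho> - 1) * \<tau> \<le> (\<rho> - 1) * f x" using rho fx by (intro mult_left_mono) auto
    finally show "S \<le> \<rho> * f x" by (simp add: algebra_simps)
  qed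
  have Spos: "\<tau> \<le> S" using hS[of s] hI[OF sI] st by auto
  define X where "X = (t - s) * exp (- ((K + 1) / \<tau> * (t - s))) / (2 * \<rho>) - e * exp ((K + 1) / \<tau> * (t - s)) / (2 * sqrt S)"
  have X0: "l * exp (- (\<kappa> * l)) / (4 * \<rho>) \<le> X"
  proof -
    have sq: "sqrt \<tau> \<le> sqrt S" using Spos by simp
    have sqp: "0 < sqrt \<tau>" using tau by simp
    have "e * exp (\<kappa> * l) / (2 * sqrt S) \<le> e * exp (\<kappa> * l) / (2 * sqrt \<tau>)"
      using sq sqp e_pos by (intro divide_left_mono mult_left_mono) auto
    also have "\<dots> \<le> (l * exp (- (2 * \<kappa> * l)) * sqrt \<tau> / (2 * \<rho>)) * exp (\<kappa> * l) / (2 * sqrt \<tau>)"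
      using esmall sqp by (intro divide_right_mono mult_right_mono) auto
    also have "\<dots> = l * (exp (- (2 * \<kappa> * l)) * exp (\<kappa> * l)) / (4 * \<rho>)"
      using sqp rho by (simp add: field_simps)
    also have "exp (- (2 * \<kappa> * l)) * exp (\<kappa> * l) = exp (- (\<kappa> * l))" by (simp add: exp_add[symmetric])
    finally have "e * exp (\<kappa> * l) / (2 * sqrt S) \<le> l * exp (- (\<kappa> * l)) / (4 * \<rho>)" .
    moreover have "l * exp (- (\<kappa> * l)) / (2 * \<rho>) = 2 * (l * exp (- (\<kappa> * l)) / (4 * \<rho>))" by simp
    ultimately show ?thesis unfolding X_def st(2) kap[symmetric] by linarith
  qed
  have Xnn: "0 \<le> X" using X0 lpos rho by (smt (verit) divide_nonneg_pos exp_gt_zero mult_pos_pos)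
  have core_app: "X / (exp ((K + 1) / \<tau> * L) * (L + 2 * (3 * \<tau>) / (m / 2))) \<le> integral {s..t} w"
    unfolding X_def
    by (rule core_est[where aL = a1 and aR = a2 and \<tau> = \<tau> and KK = "K + 1" and \<rho> = \<rho> and \<mu> = "m/2" and B = "3 * \<tau>"])
       (use a1 a2 s st tau rho m hI hS left right Xnn[unfolded X_def] in \<open>auto simp: t_def\<close>)
  have D: "0 < exp (\<kappa> * L) * (L + 2 * (3 * \<tau>) / (m / 2))" using L_pos tau m by (simp add: add_pos_nonneg)
  have "(l * exp (- (\<kappa> * l)) / (4 * \<rho>)) / (exp (\<kappa> * L) * (L + 2 * (3 * \<tau>) / (m / 2)))
        \<le> X / (exp (\<kappa> * L) * (L + 2 * (3 * \<tau>) / (m / 2)))"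
    using X0 D by (intro divide_right_mono) auto
  also have "\<dots> \<le> integral {s..t} w" using core_app unfolding kap .
  finally show ?thesis using st s Isub by (intro exI[of _ s] exI[of _ t]) (auto simp: t_def)
qed

end

context sol begin

lemma bnd_gen:
  assumes sb: "0 \<le> s" "s < t" "t \<le> L" and z: "z = s \<or> z = t" and nu: "\<nu> > 0"
    and h: "\<And>x. x \<in> {s..t} \<Longrightarrow> \<nu>/2 \<le> f x \<and> \<bar>W' x\<bar> \<le> K1"
    and C1: "C1 \<le> integral {s..t} w"
    and Wb: "\<bar>W z\<bar> \<le> M1" and Qz: "Q z = e\<^sup>2 * p z"
  shows "C1 / ((t - s) * exp (K1 / (\<nu>/2) * (t - s)) * (1 + 2 * (M1 + 1) / \<nu>)) \<le> e\<^sup>2 * p z / (\<bar>E\<bar> + 1)"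
proof -
  define \<kappa> where "\<kappa> = K1 / (\<nu>/2)"
  have zI: "z \<in> {s..t}" using z sb by auto
  have nu2: "\<nu>/2 > 0" using nu by simp
  have fpos: "0 < f x" if "x \<in> {s..t}" for x using h[OF that] nu by auto
  have K1: "0 \<le> K1" using h[OF zI] by (auto intro: order_trans[OF abs_ge_zero])
  have Rz: "0 \<le> R z" by (rule R_nn[OF fpos[OF zI]])
  have up: "w x \<le> exp (\<kappa> * (t - s)) * R z" if x: "x \<in> {s..t}" for x
  proof -
    have "w x \<le> R x" by (rule R_ge_w[OF fpos[OF x]])
    also have "R x \<le> exp (K1 / (\<nu>/2) * \<bar>x - z\<bar>) * R z"
      by (rule gronwall[OF sb(1) sb(3) nu2]) (use h x zI in auto)
    also have "\<dots> \<le> exp (\<kappa> * (t - s)) * R z"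
    proof (rule mult_right_mono[OF _ Rz])
      have "\<bar>x - z\<bar> \<le> t - s" using x zI by auto
      then have "K1 / (\<nu>/2) * \<bar>x - z\<bar> \<le> \<kappa> * (t - s)" unfolding \<kappa>_def using K1 nu by (intro mult_left_mono) auto
      then show "exp (K1 / (\<nu>/2) * \<bar>x - z\<bar>) \<le> exp (\<kappa> * (t - s))" by simp
    qed
    finally show ?thesis .
  qed
  have "C1 \<le> integral {s..t} (\<lambda>x. exp (\<kappa> * (t - s)) * R z)"
    using C1 by (rule order_trans)
       (rule integral_le, use up int_on[OF w_c sb(1) sb(3)] in auto)
  also have "\<dots> = (t - s) * exp (\<kappa> * (t - s)) * R z" using sb by simp
  finally have C1R: "C1 \<le> (t - s) * exp (\<kappa> * (t - s)) * R z" .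
  define c where "c = 1 + 2 * (M1 + 1) / \<nu>"
  have M1: "0 \<le> M1" using Wb by (auto intro: order_trans[OF abs_ge_zero])
  have cpos: "c > 0" using M1 nu by (simp add: c_def add_pos_nonneg)
  have fz: "\<nu>/2 \<le> f z" using h[OF zI] by auto
  have Eb: "\<bar>E\<bar> + 1 \<le> f z * c"
  proof -
    have "\<bar>E\<bar> \<le> f z + M1" using Wb fpos[OF zI] unfolding f_def by (auto simp: abs_le_iff)
    moreover have "M1 + 1 \<le> f z * (2 * (M1 + 1) / \<nu>)"
    proof -
      have "(M1 + 1) * 1 \<le> (M1 + 1) * (f z * 2 / \<nu>)" using fz nu M1 by (intro mult_left_mono) (auto simp: field_simps)
      then show ?thesis by (simp add: field_simps)
    qed
    ultimately show ?thesis by (simp add: c_def algebra_simps)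
  qed
  have "e\<^sup>2 * p z = f z * R z" using Qz Q_eq[OF fpos[OF zI]] by simp
  have D: "0 < (t - s) * exp (\<kappa> * (t - s))" using sb by simp
  have "C1 \<le> R z * ((t - s) * exp (\<kappa> * (t - s)))" by (subst mult.commute) (rule C1R)
  then have "C1 / ((t - s) * exp (\<kappa> * (t - s))) \<le> R z" using pos_divide_le_eq[OF D] by blast
  then have "C1 / ((t - s) * exp (\<kappa> * (t - s))) / c \<le> R z / c" using cpos by (intro divide_right_mono) auto
  then have "C1 / ((t - s) * exp (\<kappa> * (t - s)) * c) \<le> R z / c" by (simp add: divide_divide_eq_left)
  also have "R z / c = f z * R z / (f z * c)" using fpos[OF zI] by simp
  also have "\<dots> \<le> f z * R z / (\<bar>E\<bar> + 1)"
    using Eb fpos[OF zI] Rz by (intro divide_left_mono mult_nonneg_nonneg) auto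
  also have "f z * R z = e\<^sup>2 * p z" using Qz Q_eq[OF fpos[OF zI]] by simp
  finally show ?thesis unfolding \<kappa>_def c_def .
qed

end



lemma ev_right: assumes "eventually P (at_right (0::real))" shows "\<exists>e1>0. \<forall>e. 0 < e \<longrightarrow> e < e1 \<longrightarrow> P e"
  using assms unfolding eventually_at_right_field by auto

context vpot begin

lemma cont_at: assumes "z \<in> {0..L}" "r > 0" shows "\<exists>d>0. \<forall>x\<in>{0..L}. \<bar>x - z\<bar> < d \<longrightarrow> \<bar>V x - V z\<bar> < r"
  using V_c assms unfolding continuous_on_iff dist_real_def by blast

lemma bndK: "\<exists>K. \<forall>x\<in>{0..L}. \<bar>V' x\<bar> \<le> K"
proof -
  have "continuous_on {0..L} (\<lambda>x. \<bar>V' x\<bar>)" using V'_c by (intro continuous_intros)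
  then obtain z where "\<forall>y\<in>{0..L}. \<bar>V' y\<bar> \<le> \<bar>V' z\<bar>"
    using continuous_attains_sup[of "{0..L}" "\<lambda>x. \<bar>V' x\<bar>"] L_pos by force
  then show ?thesis by blast
qed

lemma bndM: "\<exists>M. \<forall>x\<in>{0..L}. \<bar>V x\<bar> \<le> M"
proof -
  have "continuous_on {0..L} (\<lambda>x. \<bar>V x\<bar>)" using V_c by (intro continuous_intros)
  then obtain z where "\<forall>y\<in>{0..L}. \<bar>V y\<bar> \<le> \<bar>V z\<bar>"
    using continuous_attains_sup[of "{0..L}" "\<lambda>x. \<bar>V x\<bar>"] L_pos by force
  then show ?thesis by blast
qed

lemma part1:
  fixes q q' :: "real \<Rightarrow> real \<Rightarrow> real" and lam :: "real \<Rightarrow> real" and \<nu> :: real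
  assumes q_lim: "uniform_limit {0..L} q (\<lambda>x. 0) (at_right 0)"
    and q'_lim: "uniform_limit {0..L} q' (\<lambda>x. 0) (at_right 0)"
    and lam_lim: "(lam \<longlongrightarrow> 0) (at_right 0)" and nu: "\<nu> > 0"
  shows "\<exists>C>0. \<exists>e0>0. \<forall>y\<in>{0..L}. \<forall>e\<in>{0<..e0}. \<forall>E a b a' b'.
     sol L e E (\<lambda>x. V x + q e x) (\<lambda>x. V' x + q' e x) a b a' b' \<and> V y - lam e \<le> E \<longrightarrow>
     (\<exists>s t. s < t \<and> {s..t} \<subseteq> {y - \<nu><..<y + \<nu>} \<inter> {0..L} \<and> C \<le> integral {s..t} (\<lambda>x. (a x)\<^sup>2 + (b x)\<^sup>2))"
proof -
  obtain K where K: "\<forall>x\<in>{0..L}. \<bar>V' x\<bar> \<le> K" using bndK by blast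
  obtain M where M: "\<forall>x\<in>{0..L}. \<bar>V x\<bar> \<le> M" using bndM by blast
  obtain dg where dg: "dg > 0" "\<forall>x\<in>{0..L}. \<nu>/3 \<le> \<bar>x - x0\<bar> \<longrightarrow> V x0 + dg \<le> V x" using gap[of "\<nu>/3"] nu by auto
  define \<delta> where "\<delta> = min 1 (dg/4)"
  have d: "0 < \<delta>" "\<delta> \<le> 1" using dg by (auto simp: \<delta>_def)
  have gapd: "\<forall>x\<in>{0..L}. \<nu>/3 \<le> \<bar>x - x0\<bar> \<longrightarrow> V x0 + 4 * \<delta> \<le> V x"
  proof (intro ballI impI)
    fix x assume "x \<in> {0..L}" "\<nu>/3 \<le> \<bar>x - x0\<bar>"
    then have "V x0 + dg \<le> V x" using dg by auto
    moreover have "4 * \<delta> \<le> dg" by (simp add: \<delta>_def)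
    ultimately show "V x0 + 4 * \<delta> \<le> V x" by linarith
  qed
  have x0I: "x0 \<in> {0..L}" using x0_in by auto
  obtain \<eta>c where \<eta>c: "\<eta>c > 0" "\<forall>x\<in>{0..L}. \<bar>x - x0\<bar> < \<eta>c \<longrightarrow> \<bar>V x - V x0\<bar> < \<delta>/2"
    using cont_at[OF x0I, of "\<delta>/2"] d by auto
  define \<eta> where "\<eta> = min \<eta>c (min (x0/2) ((L - x0)/2))"
  have etab: "\<eta> \<le> \<eta>c" "\<eta> \<le> x0/2" "\<eta> \<le> (L - x0)/2" by (auto simp: \<eta>_def min_def)
  have eta0: "\<eta> > 0" "x0 + \<eta> < L" "0 < x0 - \<eta>" using \<eta>c x0_in etab by (auto simp: \<eta>_def)
  have eta: "\<eta> \<le> \<bar>x - x0\<bar>" if "x \<in> {0..L}" "V x0 + \<delta>/2 \<le> V x" for x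
  proof (rule ccontr)
    assume "\<not> \<eta> \<le> \<bar>x - x0\<bar>"
    then have "\<bar>x - x0\<bar> < \<eta>c" using etab by linarith
    then have "\<bar>V x - V x0\<bar> < \<delta>/2" using \<eta>c that by auto
    then show False using that(2) abs_ge_self[of "V x - V x0"] by linarith
  qed
  obtain m1 where m1: "m1 > 0" "\<forall>x\<in>{x0 + \<eta>..L}. m1 \<le> V' x" using slope_pos[of "x0 + \<eta>"] eta0 by auto
  obtain m2 where m2: "m2 > 0" "\<forall>x\<in>{0..x0 - \<eta>}. V' x \<le> - m2" using slope_neg[of "x0 - \<eta>"] eta0 by auto
  define m where "m = min m1 m2"
  have m: "m > 0" using m1 m2 by (simp add: m_def)
  have mm: "m \<le> m1" "m \<le> m2" by (simp_all add: m_def)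
  have Vpp: "m \<le> V' x" if "x \<in> {x0 + \<eta>..L}" for x
  proof -
    have "m1 \<le> V' x" using m1(2) that by blast
    then show ?thesis using mm by linarith
  qed
  have Vpn: "V' x \<le> - m" if "x \<in> {0..x0 - \<eta>}" for x
  proof -
    have "V' x \<le> - m2" using m2(2) that by blast
    then show ?thesis using mm by linarith
  qed
  have linp: "m * (z - x) \<le> V z - V x" if "x0 + \<eta> \<le> x" "x \<le> z" "z \<le> L" for x z
    by (rule linV) (use that eta0 x0_in Vpp in auto)
  have linn: "m * (z - x) \<le> V x - V z" if "0 \<le> x" "x \<le> z" "z \<le> x0 - \<eta>" for x z
  proof -
    have "V z - V x \<le> - m * (z - x)" by (rule linV') (use that eta0 x0_in Vpn in auto)
    then show ?thesis by simp
  qed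
  have monp: "V x \<le> V z" if "x0 \<le> x" "x \<le> z" "z \<le> L" for x z using mon_pos that .
  have monn: "V z \<le> V x" if "0 \<le> x" "x \<le> z" "z \<le> x0" for x z using mon_neg that .
  obtain \<eta>d where \<eta>d: "\<eta>d > 0" "\<forall>x\<in>{0..L}. \<bar>x - x0\<bar> < \<eta>d \<longrightarrow> \<bar>V x - V x0\<bar> < \<delta>/4"
    using cont_at[OF x0I, of "\<delta>/4"] d by auto
  define \<eta>' where "\<eta>' = min (\<eta>d/2) (min (x0/2) ((L - x0)/2))"
  have etab': "\<eta>' \<le> \<eta>d/2" "\<eta>' \<le> x0/2" "\<eta>' \<le> (L - x0)/2" by (auto simp: \<eta>'_def min_def)
  have eta': "\<eta>' > 0" "0 \<le> x0 - \<eta>'" "x0 + \<eta>' \<le> L" using \<eta>d x0_in etab' by (auto simp: \<eta>'_def)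
  have eta'4: "V x \<le> V x0 + \<delta>/4" if "\<bar>x - x0\<bar> \<le> \<eta>'" for x
  proof -
    have "x \<in> {0..L}" using that x0_in etab' by (auto simp: abs_le_iff)
    moreover have "\<bar>x - x0\<bar> < \<eta>d" using that \<eta>d etab' by linarith
    ultimately have "\<bar>V x - V x0\<bar> < \<delta>/4" using \<eta>d by blast
    then show ?thesis using abs_ge_self[of "V x - V x0"] by linarith
  qed
  define tz where "tz = min (\<delta>/2) (m * \<nu> / 8)"
  have t0: "tz > 0" "tz \<le> \<delta>/2" "tz \<le> m * \<nu> / 8" using d m nu by (auto simp: tz_def)
  define \<tau> where "\<tau> = tz / 2"
  define l where "l = min (\<nu>/4) \<eta>'"
  define \<kappa> where "\<kappa> = (K + 1) / (tz / 2)"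
  define \<rho> where "\<rho> = 1 + 4 * (M + 1) / (tz / 2)"
  have K0: "0 \<le> K" using K x0I by (auto intro: order_trans[OF abs_ge_zero])
  have M0: "0 \<le> M" using M x0I by (auto intro: order_trans[OF abs_ge_zero])
  have lpos: "l > 0" using nu eta' by (simp add: l_def)
  have rpos: "\<rho> > 0" using M0 t0 by (simp add: \<rho>_def add_pos_nonneg)
  have tpos: "\<tau> > 0" using t0 by (simp add: \<tau>_def)
  define eH where "eH = l * exp (- (2 * \<kappa> * l)) * sqrt \<tau> / (2 * \<rho>)"
  define eG where "eG = \<nu> * \<delta> / 18"
  define CH where "CH = (l * exp (- (\<kappa> * l)) / (4 * \<rho>)) / (exp (\<kappa> * L) * (L + 2 * (3 * \<tau>) / (m / 2)))"
  have eH: "eH > 0" using lpos tpos rpos by (simp add: eH_def)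
  have eG: "eG > 0" using nu d by (simp add: eG_def)
  have CH: "CH > 0" using lpos rpos L_pos tpos m by (simp add: CH_def add_pos_nonneg)
  have "eventually (\<lambda>e. \<forall>x\<in>{0..L}. dist (q e x) 0 < min (tz/2) 1) (at_right 0)"
    using uniform_limitD[OF q_lim, of "min (tz/2) 1"] t0 by auto
  then obtain e1 where e1: "e1 > 0" "\<And>e. 0 < e \<Longrightarrow> e < e1 \<Longrightarrow> \<forall>x\<in>{0..L}. \<bar>q e x\<bar> < min (tz/2) 1"
    using ev_right by (auto simp: dist_real_def) blast
  have "eventually (\<lambda>e. \<forall>x\<in>{0..L}. dist (q' e x) 0 < min (m/2) 1) (at_right 0)"
    using uniform_limitD[OF q'_lim, of "min (m/2) 1"] m by auto
  then obtain e2 where e2: "e2 > 0" "\<And>e. 0 < e \<Longrightarrow> e < e2 \<Longrightarrow> \<forall>x\<in>{0..L}. \<bar>q' e x\<bar> < min (m/2) 1"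
    using ev_right by (auto simp: dist_real_def) blast
  have "eventually (\<lambda>e. dist (lam e) 0 < tz) (at_right 0)"
    using lam_lim t0 unfolding tendsto_iff by auto
  then obtain e3 where e3: "e3 > 0" "\<And>e. 0 < e \<Longrightarrow> e < e3 \<Longrightarrow> \<bar>lam e\<bar> < tz"
    using ev_right by (auto simp: dist_real_def)
  define e0 where "e0 = min (min eH eG) (min (min e1 e2) e3 / 2)"
  have e0: "e0 > 0" using eH eG e1 e2 e3 by (simp add: e0_def)
  show ?thesis
  proof (rule exI[of _ "min (1/2) CH"], rule conjI[OF _ exI[of _ e0]], goal_cases)
    case 1 show ?case using CH by simp
  next
    case 2
    show ?case
    proof (intro conjI ballI allI impI)
    show "e0 > 0" by (rule e0)
    fix y e E a b a' b'
    assume y: "y \<in> {0..L}" and e: "e \<in> {0<..e0}"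
      and H: "sol L e E (\<lambda>x. V x + q e x) (\<lambda>x. V' x + q' e x) a b a' b' \<and> V y - lam e \<le> E"
    interpret S: sol L e E "\<lambda>x. V x + q e x" "\<lambda>x. V' x + q' e x" a b a' b' using H by simp
    have ee: "0 < e" "e < e1" "e < e2" "e < e3" "e \<le> eH" "e \<le> eG" using e e1 e2 e3 by (auto simp: e0_def)
    have qb: "\<bar>(V x + q e x) - V x\<bar> \<le> tz/2" "\<bar>(V x + q e x) - V x\<bar> \<le> 1" if "x \<in> {0..L}" for x
      using e1(2)[OF ee(1) ee(2)] that by force+
    have qb': "\<bar>(V' x + q' e x) - V' x\<bar> \<le> m/2" "\<bar>(V' x + q' e x) - V' x\<bar> \<le> 1" if "x \<in> {0..L}" for x
      using e2(2)[OF ee(1) ee(3)] that by force+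
    have qd: "\<forall>x\<in>{0..L}. \<bar>(V x + q e x) - V x\<bar> \<le> \<delta>" using qb t0 by force
    have Vy: "V y \<le> E + tz" using H e3(2)[OF ee(1) ee(4)] by (auto simp: abs_less_iff)
    have wdef: "S.w = (\<lambda>x. (a x)\<^sup>2 + (b x)\<^sup>2)" by (simp add: S.w_def[abs_def])
    show "\<exists>s t. s < t \<and> {s..t} \<subseteq> {y - \<nu><..<y + \<nu>} \<inter> {0..L} \<and> min (1/2) CH \<le> integral {s..t} (\<lambda>x. (a x)\<^sup>2 + (b x)\<^sup>2)"
    proof (cases "E \<le> V x0 + \<delta>")
      case True
      have "\<exists>s t. s < t \<and> {s..t} \<subseteq> {y - \<nu><..<y + \<nu>} \<inter> {0..L} \<and> 1/2 \<le> integral {s..t} S.w"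
        by (rule S.partG[where V = V and xc = x0 and \<delta> = \<delta>])
           (use x0_in nu d x0_min gapd qd True y Vy t0 ee in \<open>auto simp: eG_def\<close>)
      then show ?thesis unfolding wdef by (meson min.cobounded1 order_trans)
    next
      case False
      have "\<exists>s t. s < t \<and> {s..t} \<subseteq> {y - \<nu><..<y + \<nu>} \<inter> {0..L} \<and> CH \<le> integral {s..t} S.w"
        unfolding CH_def \<tau>_def \<kappa>_def \<rho>_def l_def
        by (rule S.partH[where V = V and V' = V' and xc = x0 and \<delta> = \<delta> and \<eta> = \<eta> and \<eta>' = \<eta>' and m = m and tz = tz and M = M and K = K])
           (use x0_in nu d m t0 V_c monp monn linp linn Vpp Vpn eta eta' eta'4 K M qb qb' False y Vy ee in
             \<open>auto simp: eH_def \<tau>_def \<kappa>_def \<rho>_def l_def\<close>)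
      then show ?thesis unfolding wdef by (meson min.cobounded2 order_trans)
    qed
  qed
  qed
qed


lemma part2:
  fixes q q' :: "real \<Rightarrow> real \<Rightarrow> real" and lam :: "real \<Rightarrow> real" and \<nu> :: real
  assumes q_lim: "uniform_limit {0..L} q (\<lambda>x. 0) (at_right 0)"
    and q'_lim: "uniform_limit {0..L} q' (\<lambda>x. 0) (at_right 0)"
    and lam_lim: "(lam \<longlongrightarrow> 0) (at_right 0)" and nu: "\<nu> > 0"
  shows "\<exists>C>0. \<exists>e0>0. \<forall>e\<in>{0<..e0}. \<forall>E a b a' b'.
     sol L e E (\<lambda>x. V x + q e x) (\<lambda>x. V' x + q' e x) a b a' b' \<longrightarrow>
     (V 0 + \<nu> \<le> E \<longrightarrow> C \<le> e\<^sup>2 * ((a' 0)\<^sup>2 + (b' 0)\<^sup>2) / (\<bar>E\<bar> + 1)) \<and>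
     (V L + \<nu> \<le> E \<longrightarrow> C \<le> e\<^sup>2 * ((a' L)\<^sup>2 + (b' L)\<^sup>2) / (\<bar>E\<bar> + 1))"
proof -
  obtain K where K: "\<forall>x\<in>{0..L}. \<bar>V' x\<bar> \<le> K" using bndK by blast
  obtain M where M: "\<forall>x\<in>{0..L}. \<bar>V x\<bar> \<le> M" using bndM by blast
  have K0: "0 \<le> K" using K[rule_format, of 0] L_pos by (auto intro: order_trans[OF abs_ge_zero])
  have M0: "0 \<le> M" using M[rule_format, of 0] L_pos by (auto intro: order_trans[OF abs_ge_zero])
  have I0: "0 \<in> {0..L}" and IL: "L \<in> {0..L}" using L_pos by auto
  obtain d0 where d0: "d0 > 0" "\<forall>x\<in>{0..L}. \<bar>x - 0\<bar> < d0 \<longrightarrow> \<bar>V x - V 0\<bar> < \<nu>/4"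
    using cont_at[OF I0, of "\<nu>/4"] nu by auto
  obtain dL where dL: "dL > 0" "\<forall>x\<in>{0..L}. \<bar>x - L\<bar> < dL \<longrightarrow> \<bar>V x - V L\<bar> < \<nu>/4"
    using cont_at[OF IL, of "\<nu>/4"] nu by auto
  define b0 where "b0 = min (L/2) (min d0 dL / 2)"
  have bb: "b0 \<le> L/2" "b0 \<le> d0/2" "b0 \<le> dL/2" by (auto simp: b0_def min_def)
  have b0: "0 < b0" "b0 \<le> L" using L_pos d0 dL bb by (auto simp: b0_def)
  have V0: "\<bar>V x - V 0\<bar> < \<nu>/4" if "x \<in> {0..b0}" for x using d0 that bb b0 by auto
  have VL: "\<bar>V x - V L\<bar> < \<nu>/4" if "x \<in> {L - b0..L}" for x
  proof -
    have "\<bar>x - L\<bar> < dL" using that bb dL by (auto simp: abs_if)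
    then show ?thesis using dL that b0 by auto
  qed
  obtain C1 e1 where C1: "C1 > 0" "e1 > 0" and P1: "\<forall>y\<in>{0..L}. \<forall>e\<in>{0<..e1}. \<forall>E a b a' b'.
     sol L e E (\<lambda>x. V x + q e x) (\<lambda>x. V' x + q' e x) a b a' b' \<and> V y - lam e \<le> E \<longrightarrow>
     (\<exists>s t. s < t \<and> {s..t} \<subseteq> {y - b0<..<y + b0} \<inter> {0..L} \<and> C1 \<le> integral {s..t} (\<lambda>x. (a x)\<^sup>2 + (b x)\<^sup>2))"
    using part1[OF q_lim q'_lim lam_lim b0(1)] by blast
  have "eventually (\<lambda>e. \<forall>x\<in>{0..L}. dist (q e x) 0 < \<nu>/4) (at_right 0)"
    using uniform_limitD[OF q_lim, of "\<nu>/4"] nu by auto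
  then obtain e2 where e2: "e2 > 0" "\<And>e. 0 < e \<Longrightarrow> e < e2 \<Longrightarrow> \<forall>x\<in>{0..L}. \<bar>q e x\<bar> < \<nu>/4"
    using ev_right by (auto simp: dist_real_def) blast
  have "eventually (\<lambda>e. \<forall>x\<in>{0..L}. dist (q' e x) 0 < 1) (at_right 0)"
    using uniform_limitD[OF q'_lim, of 1] by auto
  then obtain e3 where e3: "e3 > 0" "\<And>e. 0 < e \<Longrightarrow> e < e3 \<Longrightarrow> \<forall>x\<in>{0..L}. \<bar>q' e x\<bar> < 1"
    using ev_right by (auto simp: dist_real_def) blast
  have "eventually (\<lambda>e. dist (lam e) 0 < \<nu>) (at_right 0)"
    using lam_lim nu unfolding tendsto_iff by auto
  then obtain e4 where e4: "e4 > 0" "\<And>e. 0 < e \<Longrightarrow> e < e4 \<Longrightarrow> \<bar>lam e\<bar> < \<nu>"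
    using ev_right by (auto simp: dist_real_def)
  define e0 where "e0 = min e1 (min (min e2 e3) e4 / 2)"
  have e0: "e0 > 0" using C1 e2 e3 e4 by (simp add: e0_def)
  define C where "C = C1 / ((b0 - 0) * exp ((K + 1) / (\<nu>/2) * (b0 - 0)) * (1 + 2 * ((M + \<nu>) + 1) / \<nu>))"
  have CL: "C = C1 / ((L - (L - b0)) * exp ((K + 1) / (\<nu>/2) * (L - (L - b0))) * (1 + 2 * ((M + \<nu>) + 1) / \<nu>))"
    by (simp add: C_def)
  have Cpos: "C > 0" using C1 b0 nu M0 by (simp add: C_def add_pos_nonneg pos_add_strict)
  show ?thesis
  proof (rule exI[of _ C], rule conjI[OF Cpos], rule exI[of _ e0], rule conjI[OF e0], intro ballI allI impI)
    fix e E a b a' b'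
    assume e: "e \<in> {0<..e0}" and H: "sol L e E (\<lambda>x. V x + q e x) (\<lambda>x. V' x + q' e x) a b a' b'"
    interpret S: sol L e E "\<lambda>x. V x + q e x" "\<lambda>x. V' x + q' e x" a b a' b' by (rule H)
    have ee: "0 < e" "e \<le> e1" "e < e2" "e < e3" "e < e4" using e by (auto simp: e0_def)
    have qb: "\<bar>q e x\<bar> < \<nu>/4" "\<bar>q' e x\<bar> < 1" if "x \<in> {0..L}" for x
      using e2(2)[OF ee(1) ee(3)] e3(2)[OF ee(1) ee(4)] that by auto
    have lb: "\<bar>lam e\<bar> < \<nu>" using e4(2)[OF ee(1) ee(5)] .
    have eI: "e \<in> {0<..e1}" using ee by auto
    have wdef: "S.w = (\<lambda>x. (a x)\<^sup>2 + (b x)\<^sup>2)" by (simp add: S.w_def[abs_def])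
    have pdef: "S.p z = (a' z)\<^sup>2 + (b' z)\<^sup>2" for z by (simp add: S.p_def)
    have Wp: "\<bar>V' x + q' e x\<bar> \<le> K + 1" if "x \<in> {0..L}" for x using K qb(2)[OF that] that by (force simp: abs_le_iff)
    have Wbz: "\<bar>V z + q e z\<bar> \<le> M + \<nu>" if "z \<in> {0..L}" for z
      using abs_triangle_ineq[of "V z" "q e z"] M[rule_format, OF that] qb(1)[OF that] nu by linarith
    have A: "V 0 + \<nu> \<le> E \<longrightarrow> C \<le> e\<^sup>2 * ((a' 0)\<^sup>2 + (b' 0)\<^sup>2) / (\<bar>E\<bar> + 1)"
    proof
      assume E0: "V 0 + \<nu> \<le> E"
      have "V 0 - lam e \<le> E" using E0 lb by (auto simp: abs_less_iff)
      then obtain s t where st: "s < t" "{s..t} \<subseteq> {0 - b0<..<0 + b0} \<inter> {0..L}" "C1 \<le> integral {s..t} S.w"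
        using P1[rule_format, OF I0 eI, of E a b a' b'] H unfolding wdef by blast
      have "C1 \<le> integral {0..b0} S.w"
      proof -
        have tb: "0 \<le> s" "t \<le> b0" using subsetD[OF st(2), of t] subsetD[OF st(2), of s] st(1) by auto
        have "integral {s..t} S.w \<le> integral {0..b0} S.w"
          by (rule integral_subset_le) (use tb st b0 S.w_nn in \<open>auto intro!: S.int_on[OF S.w_c]\<close>)
        then show ?thesis using st by linarith
      qed
      have "C \<le> e\<^sup>2 * S.p 0 / (\<bar>E\<bar> + 1)" unfolding C_def
      proof (rule S.bnd_gen[where s = 0 and t = b0 and z = 0 and \<nu> = \<nu>])
        fix x assume x: "x \<in> {0..b0}"
        have xI: "x \<in> {0..L}" using x b0 by auto
        show "\<nu>/2 \<le> S.f x \<and> \<bar>V' x + q' e x\<bar> \<le> K + 1"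
        proof
          have "V x - V 0 < \<nu>/4" using V0[OF x] abs_ge_self[of "V x - V 0"] by linarith
          moreover have "q e x < \<nu>/4" using qb(1)[OF xI] abs_ge_self[of "q e x"] by linarith
          ultimately show "\<nu>/2 \<le> S.f x" using E0 unfolding S.f_def by linarith
          show "\<bar>V' x + q' e x\<bar> \<le> K + 1" by (rule Wp[OF xI])
        qed
      qed (use b0 nu \<open>C1 \<le> integral {0..b0} S.w\<close> Wbz[OF I0] in \<open>auto simp: S.Q_def S.w0\<close>)
      then show "C \<le> e\<^sup>2 * ((a' 0)\<^sup>2 + (b' 0)\<^sup>2) / (\<bar>E\<bar> + 1)" unfolding pdef .
    qed
    have B: "V L + \<nu> \<le> E \<longrightarrow> C \<le> e\<^sup>2 * ((a' L)\<^sup>2 + (b' L)\<^sup>2) / (\<bar>E\<bar> + 1)"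
    proof
      assume EL: "V L + \<nu> \<le> E"
      have "V L - lam e \<le> E" using EL lb by (auto simp: abs_less_iff)
      then obtain s t where st: "s < t" "{s..t} \<subseteq> {L - b0<..<L + b0} \<inter> {0..L}" "C1 \<le> integral {s..t} S.w"
        using P1[rule_format, OF IL eI, of E a b a' b'] H unfolding wdef by blast
      have "C1 \<le> integral {L - b0..L} S.w"
      proof -
        have tb: "L - b0 \<le> s" "t \<le> L" using subsetD[OF st(2), of t] subsetD[OF st(2), of s] st(1) by auto
        have "integral {s..t} S.w \<le> integral {L - b0..L} S.w"
          by (rule integral_subset_le) (use tb st b0 S.w_nn in \<open>auto intro!: S.int_on[OF S.w_c]\<close>)
        then show ?thesis using st by linarith
      qed
      have "C \<le> e\<^sup>2 * S.p L / (\<bar>E\<bar> + 1)" unfolding CL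
      proof (rule S.bnd_gen[where s = "L - b0" and t = L and z = L and \<nu> = \<nu>])
        fix x assume x: "x \<in> {L - b0..L}"
        have xI: "x \<in> {0..L}" using x b0 by auto
        show "\<nu>/2 \<le> S.f x \<and> \<bar>V' x + q' e x\<bar> \<le> K + 1"
        proof
          have "V x - V L < \<nu>/4" using VL[OF x] abs_ge_self[of "V x - V L"] by linarith
          moreover have "q e x < \<nu>/4" using qb(1)[OF xI] abs_ge_self[of "q e x"] by linarith
          ultimately show "\<nu>/2 \<le> S.f x" using EL unfolding S.f_def by linarith
          show "\<bar>V' x + q' e x\<bar> \<le> K + 1" by (rule Wp[OF xI])
        qed
      qed (use b0 nu \<open>C1 \<le> integral {L - b0..L} S.w\<close> Wbz[OF IL] in \<open>auto simp: S.Q_def S.wL\<close>)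
      then show "C \<le> e\<^sup>2 * ((a' L)\<^sup>2 + (b' L)\<^sup>2) / (\<bar>E\<bar> + 1)" unfolding pdef .
    qed
    from A B show "(V 0 + \<nu> \<le> E \<longrightarrow> C \<le> e\<^sup>2 * ((a' 0)\<^sup>2 + (b' 0)\<^sup>2) / (\<bar>E\<bar> + 1)) \<and>
      (V L + \<nu> \<le> E \<longrightarrow> C \<le> e\<^sup>2 * ((a' L)\<^sup>2 + (b' L)\<^sup>2) / (\<bar>E\<bar> + 1))" by blast
  qed
qed

end

lemma mk_sol:
  fixes L e E :: real and W W' :: "real \<Rightarrow> real" and \<psi> \<psi>' \<psi>'' :: "real \<Rightarrow> complex"
  assumes L: "0 < L" and e: "0 < e"
    and WC: "C1_on_interval L W W'"
    and H2: "H2_on L \<psi> \<psi>' \<psi>''" and bc: "dirichlet_bc L \<psi>" and nrm: "L2_norm_on {0..L} \<psi> = 1"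
    and eq: "AE x in lebesgue. x \<in> {0..L} \<longrightarrow>
          - (complex_of_real (e\<^sup>2)) * \<psi>'' x + complex_of_real (W x) * \<psi> x = complex_of_real E * \<psi> x"
  shows "sol L e E W W' (\<lambda>x. Re (\<psi> x)) (\<lambda>x. Im (\<psi> x)) (\<lambda>x. Re (\<psi>' x)) (\<lambda>x. Im (\<psi>' x))"
proof -
  have Wd: "\<And>x. x \<in> {0..L} \<Longrightarrow> (W has_real_derivative W' x) (at x within {0..L})" and W'c: "continuous_on {0..L} W'"
    using WC unfolding C1_on_interval_def by blast+
  have Wc: "continuous_on {0..L} W" unfolding continuous_on_eq_continuous_within using Wd DERIV_continuous by blast
  have pd: "\<And>x. x \<in> {0..L} \<Longrightarrow> (\<psi> has_vector_derivative \<psi>' x) (at x within {0..L})"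
    and p'int: "\<And>x. x \<in> {0..L} \<Longrightarrow> \<psi>' x = \<psi>' 0 + integral {0..x} \<psi>''"
    using H2 unfolding H2_on_def by blast+
  have pc: "continuous_on {0..L} \<psi>"
    unfolding continuous_on_eq_continuous_within using pd has_vector_derivative_continuous by blast
  define h where "h x = complex_of_real ((W x - E) / e\<^sup>2) * \<psi> x" for x
  have hc: "continuous_on {0..L} h" unfolding h_def using Wc pc by (intro continuous_intros) (use e in auto)
  obtain N where N: "\<And>x. x \<in> space lebesgue - N \<Longrightarrow> (x \<in> {0..L} \<longrightarrow>
          - (complex_of_real (e\<^sup>2)) * \<psi>'' x + complex_of_real (W x) * \<psi> x = complex_of_real E * \<psi> x)"
    "N \<in> null_sets lebesgue"
    using AE_E3[OF eq] by blast
  have negN: "negligible N" using N(2) negligible_iff_null_sets by blast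
  have hval: "\<psi>'' x = h x" if "x \<in> {0..L} - N" for x
  proof -
    have "- (complex_of_real (e\<^sup>2)) * \<psi>'' x + complex_of_real (W x) * \<psi> x = complex_of_real E * \<psi> x"
      using N(1)[of x] that by auto
    then have "complex_of_real (e\<^sup>2) * \<psi>'' x = complex_of_real (W x - E) * \<psi> x"
      by (simp add: algebra_simps)
    moreover have "complex_of_real (e\<^sup>2) \<noteq> 0" using e by simp
    ultimately show ?thesis unfolding h_def by (simp add: field_simps)
  qed
  have p'h: "\<psi>' x = \<psi>' 0 + integral {0..x} h" if x: "x \<in> {0..L}" for x
  proof -
    have "integral {0..x} \<psi>'' = integral {0..x} h"
      by (rule integral_spike[OF negN]) (use hval x in auto)
    then show ?thesis using p'int[OF x] by simp
  qed
  have p'd: "(\<psi>' has_vector_derivative h x) (at x within {0..L})" if x: "x \<in> {0..L}" for x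
  proof -
    have D: "((\<lambda>u. \<psi>' 0 + integral {0..u} h) has_vector_derivative h x) (at x within {0..L})"
      using has_vector_derivative_add[OF has_vector_derivative_const integral_has_vector_derivative[OF hc x]] by simp
    show ?thesis
    proof (rule has_vector_derivative_transform_within[OF D, where d = 1])
      fix x' assume x': "x' \<in> {0..L}" "dist x' x < 1"
      have "\<psi>' x' = \<psi>' 0 + integral {0..x'} h" by (rule p'h[OF x'(1)])
      then show "\<psi>' 0 + integral {0..x'} h = \<psi>' x'" by (rule sym)
    qed (use x in auto)
  qed
  show ?thesis
  proof
    show "0 < L" "0 < e" by (fact L, fact e)
    show "\<And>x. x \<in> {0..L} \<Longrightarrow> (W has_real_derivative W' x) (at x within {0..L})" by (fact Wd)
    show "continuous_on {0..L} W'" by (fact W'c)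
    show "((\<lambda>x. Re (\<psi> x)) has_real_derivative Re (\<psi>' x)) (at x within {0..L})" if "x \<in> {0..L}" for x
      using has_field_derivative_Re[OF pd[OF that]] .
    show "((\<lambda>x. Im (\<psi> x)) has_real_derivative Im (\<psi>' x)) (at x within {0..L})" if "x \<in> {0..L}" for x
      using has_field_derivative_Im[OF pd[OF that]] .
    show "((\<lambda>x. Re (\<psi>' x)) has_real_derivative - (E - W x) / e\<^sup>2 * Re (\<psi> x)) (at x within {0..L})" if "x \<in> {0..L}" for x
      using has_field_derivative_Re[OF p'd[OF that]] by (simp add: h_def)
    show "((\<lambda>x. Im (\<psi>' x)) has_real_derivative - (E - W x) / e\<^sup>2 * Im (\<psi> x)) (at x within {0..L})" if "x \<in> {0..L}" for x
      using has_field_derivative_Im[OF p'd[OF that]] by (simp add: h_def)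
    show "Re (\<psi> 0) = 0" "Im (\<psi> 0) = 0" "Re (\<psi> L) = 0" "Im (\<psi> L) = 0"
      using bc unfolding dirichlet_bc_def by auto
    have "sqrt (integral {0..L} (\<lambda>x. (norm (\<psi> x))\<^sup>2)) = 1" using nrm unfolding L2_norm_on_def .
    then have "integral {0..L} (\<lambda>x. (norm (\<psi> x))\<^sup>2) = 1" by simp
    then show "integral {0..L} (\<lambda>x. (Re (\<psi> x))\<^sup>2 + (Im (\<psi> x))\<^sup>2) = 1" by (simp add: cmod_power2)
  qed
qed

theorem proposition2p3:
  fixes L x0 :: real and V V' :: "real \<Rightarrow> real"
    and q q' :: "real \<Rightarrow> real \<Rightarrow> real" and lam :: "real \<Rightarrow> real" and \<nu> :: real
  assumes L_pos: "L > 0"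
    and V_C1: "C1_on_interval L V V'"
    and crit: "\<forall>x\<in>{0..L}. V' x = 0 \<longleftrightarrow> x = x0"
    and x0_in: "0 < x0" "x0 < L"
    and x0_min: "\<forall>x\<in>{0..L}. V x0 \<le> V x"
    and q_C1: "\<forall>e\<in>{0<..1}. C1_on_interval L (q e) (q' e)"
    and q_lim: "uniform_limit {0..L} q (\<lambda>x. 0) (at_right 0)"
    and q'_lim: "uniform_limit {0..L} q' (\<lambda>x. 0) (at_right 0)"
    and lam_lim: "(lam \<longlongrightarrow> 0) (at_right 0)"
    and nu_pos: "\<nu> > 0"
  shows "\<exists>C>0. \<exists>e0>0. e0 < 1 \<and>
    (\<forall>y\<in>{0..L}. \<forall>e\<in>{0<..e0}. \<forall>E::real. \<forall>\<psi> \<psi>' \<psi>'' :: real \<Rightarrow> complex.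
       H2_on L \<psi> \<psi>' \<psi>'' \<and> dirichlet_bc L \<psi> \<and> L2_norm_on {0..L} \<psi> = 1 \<and>
       (AE x in lebesgue. x \<in> {0..L} \<longrightarrow>
          - (complex_of_real (e\<^sup>2)) * \<psi>'' x + complex_of_real (V x + q e x) * \<psi> x
            = complex_of_real E * \<psi> x)
       \<longrightarrow>
       (E \<ge> V y - lam e \<longrightarrow> L2_norm_on ({y - \<nu><..<y + \<nu>} \<inter> {0..L}) \<psi> \<ge> C) \<and>
       (E \<ge> V 0 + \<nu> \<longrightarrow> e / sqrt (\<bar>E\<bar> + 1) * norm (\<psi>' 0) \<ge> C) \<and>
       (E \<ge> V L + \<nu> \<longrightarrow> e / sqrt (\<bar>E\<bar> + 1) * norm (\<psi>' L) \<ge> C))"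
proof -
  have Vd: "\<And>x. x \<in> {0..L} \<Longrightarrow> (V has_real_derivative V' x) (at x within {0..L})" and V'c: "continuous_on {0..L} V'"
    using V_C1 unfolding C1_on_interval_def by blast+
  interpret vpot L x0 V V'
    by (rule vpot.intro) (use L_pos Vd V'c crit x0_in x0_min in auto)
  obtain C1 e1 where C1: "C1 > 0" "e1 > 0" and P1: "\<forall>y\<in>{0..L}. \<forall>e\<in>{0<..e1}. \<forall>E a b a' b'.
     sol L e E (\<lambda>x. V x + q e x) (\<lambda>x. V' x + q' e x) a b a' b' \<and> V y - lam e \<le> E \<longrightarrow>
     (\<exists>s t. s < t \<and> {s..t} \<subseteq> {y - \<nu><..<y + \<nu>} \<inter> {0..L} \<and> C1 \<le> integral {s..t} (\<lambda>x. (a x)\<^sup>2 + (b x)\<^sup>2))"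
    using part1[OF q_lim q'_lim lam_lim nu_pos] by blast
  obtain C2 e2 where C2: "C2 > 0" "e2 > 0" and P2: "\<forall>e\<in>{0<..e2}. \<forall>E a b a' b'.
     sol L e E (\<lambda>x. V x + q e x) (\<lambda>x. V' x + q' e x) a b a' b' \<longrightarrow>
     (V 0 + \<nu> \<le> E \<longrightarrow> C2 \<le> e\<^sup>2 * ((a' 0)\<^sup>2 + (b' 0)\<^sup>2) / (\<bar>E\<bar> + 1)) \<and>
     (V L + \<nu> \<le> E \<longrightarrow> C2 \<le> e\<^sup>2 * ((a' L)\<^sup>2 + (b' L)\<^sup>2) / (\<bar>E\<bar> + 1))"
    using part2[OF q_lim q'_lim lam_lim nu_pos] by blast
  define C where "C = min (sqrt C1) (sqrt C2)"
  define e0 where "e0 = min (min e1 e2) (1/2)"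
  have Cpos: "C > 0" using C1 C2 by (simp add: C_def)
  have e0pos: "e0 > 0" using C1 C2 by (simp add: e0_def)
  have e01: "e0 < 1" by (simp add: e0_def)
  show ?thesis
  proof (rule exI[of _ C], rule conjI[OF Cpos], rule exI[of _ e0], rule conjI[OF e0pos], rule conjI[OF e01],
      intro ballI allI impI)
    fix y e E and \<psi> \<psi>' \<psi>'' :: "real \<Rightarrow> complex"
    assume y: "y \<in> {0..L}" and e: "e \<in> {0<..e0}"
      and H: "H2_on L \<psi> \<psi>' \<psi>'' \<and> dirichlet_bc L \<psi> \<and> L2_norm_on {0..L} \<psi> = 1 \<and>
       (AE x in lebesgue. x \<in> {0..L} \<longrightarrow>
          - (complex_of_real (e\<^sup>2)) * \<psi>'' x + complex_of_real (V x + q e x) * \<psi> x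
            = complex_of_real E * \<psi> x)"
    have e1': "e \<in> {0<..1}" using e e01 by auto
    have qe: "C1_on_interval L (q e) (q' e)" using q_C1 e1' by blast
    have WC: "C1_on_interval L (\<lambda>x. V x + q e x) (\<lambda>x. V' x + q' e x)"
      unfolding C1_on_interval_def
    proof (intro conjI ballI)
      fix x assume x: "x \<in> {0..L}"
      show "((\<lambda>x. V x + q e x) has_real_derivative V' x + q' e x) (at x within {0..L})"
        using DERIV_add[OF Vd[OF x], of "q e" "q' e x"] qe x unfolding C1_on_interval_def by blast
    next
      show "continuous_on {0..L} (\<lambda>x. V' x + q' e x)"
        using V'c qe unfolding C1_on_interval_def by (intro continuous_intros) auto
    qed
    have S: "sol L e E (\<lambda>x. V x + q e x) (\<lambda>x. V' x + q' e x) (\<lambda>x. Re (\<psi> x)) (\<lambda>x. Im (\<psi> x)) (\<lambda>x. Re (\<psi>' x)) (\<lambda>x. Im (\<psi>' x))"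
      by (rule mk_sol[OF L_pos _ WC]) (use e H in auto)
    interpret S: sol L e E "\<lambda>x. V x + q e x" "\<lambda>x. V' x + q' e x" "\<lambda>x. Re (\<psi> x)" "\<lambda>x. Im (\<psi> x)" "\<lambda>x. Re (\<psi>' x)" "\<lambda>x. Im (\<psi>' x)"
      by (rule S)
    have ee1: "e \<in> {0<..e1}" and ee2: "e \<in> {0<..e2}" using e by (auto simp: e0_def)
    have nsq: "(norm (\<psi> x))\<^sup>2 = (Re (\<psi> x))\<^sup>2 + (Im (\<psi> x))\<^sup>2" for x by (simp add: cmod_power2)
    have nsq': "(norm (\<psi>' x))\<^sup>2 = (Re (\<psi>' x))\<^sup>2 + (Im (\<psi>' x))\<^sup>2" for x by (simp add: cmod_power2)
    have bd: "e / sqrt (\<bar>E\<bar> + 1) * norm (\<psi>' z) = sqrt (e\<^sup>2 * ((Re (\<psi>' z))\<^sup>2 + (Im (\<psi>' z))\<^sup>2) / (\<bar>E\<bar> + 1))" for z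
    proof -
      have "sqrt (e\<^sup>2 * ((Re (\<psi>' z))\<^sup>2 + (Im (\<psi>' z))\<^sup>2) / (\<bar>E\<bar> + 1)) = sqrt (e\<^sup>2 * (norm (\<psi>' z))\<^sup>2) / sqrt (\<bar>E\<bar> + 1)"
        by (simp add: nsq' real_sqrt_divide)
      also have "sqrt (e\<^sup>2 * (norm (\<psi>' z))\<^sup>2) = e * norm (\<psi>' z)" using e by (simp add: real_sqrt_mult)
      finally show ?thesis by simp
    qed
    have B1: "V y - lam e \<le> E \<longrightarrow> C \<le> L2_norm_on ({y - \<nu><..<y + \<nu>} \<inter> {0..L}) \<psi>"
    proof
      assume Ey: "V y - lam e \<le> E"
      obtain s t where st: "s < t" "{s..t} \<subseteq> {y - \<nu><..<y + \<nu>} \<inter> {0..L}"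
        "C1 \<le> integral {s..t} (\<lambda>x. (Re (\<psi> x))\<^sup>2 + (Im (\<psi> x))\<^sup>2)"
        using P1[rule_format, OF y ee1, of E "\<lambda>x. Re (\<psi> x)" "\<lambda>x. Im (\<psi> x)" "\<lambda>x. Re (\<psi>' x)" "\<lambda>x. Im (\<psi>' x)"] S Ey by blast
      define U where "U = {y - \<nu><..<y + \<nu>} \<inter> {0..L}"
      define g where "g x = (norm (\<psi> x))\<^sup>2" for x
      have gw: "g = S.w" by (rule ext) (simp add: g_def S.w_def nsq)
      define lo where "lo = max 0 (y - \<nu>)"
      define hi where "hi = min L (y + \<nu>)"
      have gi: "g integrable_on {lo..hi}" unfolding gw by (rule S.int_on[OF S.w_c]) (auto simp: lo_def hi_def)
      have "g integrable_on U"
      proof (rule integrable_spike_set[OF gi])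
        show "negligible {x \<in> {lo..hi} - U. g x \<noteq> 0}"
          by (rule negligible_subset[of "{lo, hi}"]) (auto simp: U_def lo_def hi_def)
        show "negligible {x \<in> U - {lo..hi}. g x \<noteq> 0}"
          by (rule negligible_subset[of "{}"]) (auto simp: U_def lo_def hi_def)
      qed
      then have "integral {s..t} g \<le> integral U g"
        by (intro integral_subset_le) (use st gi in \<open>auto simp: U_def g_def intro: integrable_on_subinterval\<close>)
      moreover have "integral {s..t} g = integral {s..t} (\<lambda>x. (Re (\<psi> x))\<^sup>2 + (Im (\<psi> x))\<^sup>2)"
        unfolding gw by (simp add: S.w_def[abs_def])
      ultimately have "C1 \<le> integral U g" using st by linarith
      then have "sqrt C1 \<le> sqrt (integral U g)" by simp
      then show "C \<le> L2_norm_on ({y - \<nu><..<y + \<nu>} \<inter> {0..L}) \<psi>"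
        unfolding L2_norm_on_def U_def[symmetric] g_def[symmetric] C_def by linarith
    qed
    have P2': "(V 0 + \<nu> \<le> E \<longrightarrow> C2 \<le> e\<^sup>2 * ((Re (\<psi>' 0))\<^sup>2 + (Im (\<psi>' 0))\<^sup>2) / (\<bar>E\<bar> + 1)) \<and>
       (V L + \<nu> \<le> E \<longrightarrow> C2 \<le> e\<^sup>2 * ((Re (\<psi>' L))\<^sup>2 + (Im (\<psi>' L))\<^sup>2) / (\<bar>E\<bar> + 1))"
      using P2[rule_format, OF ee2, of E "\<lambda>x. Re (\<psi> x)" "\<lambda>x. Im (\<psi> x)" "\<lambda>x. Re (\<psi>' x)" "\<lambda>x. Im (\<psi>' x)"] S by blast
    have B2: "V 0 + \<nu> \<le> E \<longrightarrow> C \<le> e / sqrt (\<bar>E\<bar> + 1) * norm (\<psi>' 0)"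
    proof
      assume "V 0 + \<nu> \<le> E"
      then have "sqrt C2 \<le> e / sqrt (\<bar>E\<bar> + 1) * norm (\<psi>' 0)" using P2' unfolding bd by simp
      then show "C \<le> e / sqrt (\<bar>E\<bar> + 1) * norm (\<psi>' 0)" unfolding C_def by linarith
    qed
    have B3: "V L + \<nu> \<le> E \<longrightarrow> C \<le> e / sqrt (\<bar>E\<bar> + 1) * norm (\<psi>' L)"
    proof
      assume "V L + \<nu> \<le> E"
      then have "sqrt C2 \<le> e / sqrt (\<bar>E\<bar> + 1) * norm (\<psi>' L)" using P2' unfolding bd by simp
      then show "C \<le> e / sqrt (\<bar>E\<bar> + 1) * norm (\<psi>' L)" unfolding C_def by linarith
    qed
    show "(E \<ge> V y - lam e \<longrightarrow> L2_norm_on ({y - \<nu><..<y + \<nu>} \<inter> {0..L}) \<psi> \<ge> C) \<and>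
       (E \<ge> V 0 + \<nu> \<longrightarrow> e / sqrt (\<bar>E\<bar> + 1) * norm (\<psi>' 0) \<ge> C) \<and>
       (E \<ge> V L + \<nu> \<longrightarrow> e / sqrt (\<bar>E\<bar> + 1) * norm (\<psi>' L) \<ge> C)"
      using B1 B2 B3 by blast
  qed
qed


end
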